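(* Let $n>2$, $i\in[n-1]$ and let $w\in S_n$ be such that $ws_i=w_0$, the longest element of $S_n$. If $n$ is odd assume moreover $i\ne\frac{n+1}{2}$. Then the degenerate Schubert variety $X^a_w$ is reducible.
   Context: Notation: $[a,b]=\{a,\dots,b\}$, $[b]=[1,b]$; $S_n$ is the symmetric group with simple reflections $s_i=(i,i+1)$. For $v\in S_n$, $v([k])=\{v(1),\dots,v(k)\}$; for $k$-subsets $I=\{a_1<\dots<a_k\}$, $K=\{b_1<\dots<b_k\}$ of $[n]$, $I\le K$ iff $a_r\le b_r$ for all $r$. $A_n=\mathbb C[p_I:I\subseteq[n],1\le|I|\le n-1]$; for a sequence of distinct elements, $p$ of the sequence is the signed coordinate of its underlying set, $0$ if entries repeat. Plücker relations: for sequences $J=(j_1,\dots,j_e)$, $L=(l_1,\dots,l_d)$ of distinct elements of $[n]$ with $1\le e\le d\le n-1$ and $k\in[e]$, $R^k_{J,L}=p_Jp_L-\sum_{1\le r_1<\dots<r_k\le d}p_{J'}p_{L'}$, with $J'$ obtained from $J$ by replacing $j_t$ by $l_{r_t}$ and $L'$ from $L$ by replacing $l_{r_t}$ by $j_t$. $\mathcal I_{\mathrm{Fl}_n}$ is generated by all $R^k_{J,L}$, and $\mathcal I_v=\mathcal I_{\mathrm{Fl}_n}+(p_I:I\not\le v([|I|]))$ is the ideal of the Schubert variety $X_v$. Weight $\mathbf w_I=\#\{a\in I:|I|\le a\le n-1\}$; $\operatorname{in}_{\mathbf w}(f)$ is the sum of the terms of $f$ of minimal weight (weight of $\prod p_I^{\alpha_I}$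 is $\sum\alpha_I\mathbf w_I$); $\operatorname{in}_{\mathbf w}(\mathcal I)$ is generated by the $\operatorname{in}_{\mathbf w}(f)$, $f\in\mathcal I$. The degenerate Schubert variety is $X^a_v=V(\operatorname{in}_{\mathbf w}(\mathcal I_v))\subseteq\prod_{k=1}^{n-1}\mathbb P(\wedge^k\mathbb C^n)$. *)

theory Defs
  imports Complex_Main "HOL-Library.Poly_Mapping" "HOL-Combinatorics.Permutations"
    "HOL-Combinatorics.Transposition"
begin

text \<open>Polynomials in the Pluecker variables p_I (I a set of naturals), with complex
  coefficients, as finitely supported functions from monomials to coefficients.\<close>

type_synonym pvar = "nat set"
type_synonym pmono = "pvar \<Rightarrow>\<^sub>0 nat"
type_synonym ppoly = "pmono \<Rightarrow>\<^sub>0 complex"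

definition PVar :: "pvar \<Rightarrow> ppoly" where
  "PVar I = Poly_Mapping.single (Poly_Mapping.single I 1) 1"

definition valid_var :: "nat \<Rightarrow> pvar \<Rightarrow> bool" where
  "valid_var n I \<longleftrightarrow> I \<subseteq> {1..n} \<and> 1 \<le> card I \<and> card I \<le> n - 1"

definition A_ring :: "nat \<Rightarrow> ppoly set" where
  "A_ring n = {f. \<forall>m\<in>Poly_Mapping.keys f. \<forall>I\<in>Poly_Mapping.keys m. valid_var n I}"

definition ideal_gen :: "nat \<Rightarrow> ppoly set \<Rightarrow> ppoly set" where
  "ideal_gen n G = {f. \<exists>S c. finite S \<and> S \<subseteq> G \<and> (\<forall>g\<in>S. c g \<in> A_ring n)
                        \<and> f = (\<Sum>g\<in>S. c g * g)}"

definition inversions :: "nat list \<Rightarrow> nat" where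
  "inversions J = card {(a, b). a < b \<and> b < length J \<and> J ! a > J ! b}"

definition pseq :: "nat list \<Rightarrow> ppoly" where
  "pseq J = (if distinct J then (-1) ^ inversions J * PVar (set J) else 0)"

text \<open>Pluecker relation R^k_{J,L}; positions are 0-based, the chosen positions
  r_1 < ... < r_k are given as a strictly increasing list rs.\<close>
definition J_repl :: "nat \<Rightarrow> nat list \<Rightarrow> nat list \<Rightarrow> nat list \<Rightarrow> nat list" where
  "J_repl k J L rs = map (\<lambda>t. L ! (rs ! t)) [0..<k] @ drop k J"

definition L_repl :: "nat \<Rightarrow> nat list \<Rightarrow> nat list \<Rightarrow> nat list \<Rightarrow> nat list" where
  "L_repl k J L rs = fold (\<lambda>t M. M[rs ! t := J ! t]) [0..<k] L"

definition pluecker_rel :: "nat \<Rightarrow> nat list \<Rightarrow> nat list \<Rightarrow> ppoly" where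
  "pluecker_rel k J L = pseq J * pseq L -
     (\<Sum>rs\<in>{rs. sorted_wrt (<) rs \<and> length rs = k \<and> set rs \<subseteq> {..<length L}}.
        pseq (J_repl k J L rs) * pseq (L_repl k J L rs))"

definition pluecker_rels :: "nat \<Rightarrow> ppoly set" where
  "pluecker_rels n = {pluecker_rel k J L | k J L.
      distinct J \<and> distinct L \<and> set J \<subseteq> {1..n} \<and> set L \<subseteq> {1..n} \<and>
      1 \<le> length J \<and> length J \<le> length L \<and> length L \<le> n - 1 \<and>
      k \<in> {1..length J}}"

definition I_Fl :: "nat \<Rightarrow> ppoly set" where
  "I_Fl n = ideal_gen n (pluecker_rels n)"

definition gale_le :: "nat set \<Rightarrow> nat set \<Rightarrow> bool" where
  "gale_le I K \<longleftrightarrow> card I = card K \<and>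
     (\<forall>r < card I. sorted_list_of_set I ! r \<le> sorted_list_of_set K ! r)"

definition I_schubert :: "nat \<Rightarrow> (nat \<Rightarrow> nat) \<Rightarrow> ppoly set" where
  "I_schubert n v = ideal_gen n (pluecker_rels n \<union>
      {PVar I | I. valid_var n I \<and> \<not> gale_le I (v ` {1..card I})})"

definition wt_var :: "nat \<Rightarrow> pvar \<Rightarrow> nat" where
  "wt_var n I = card {a\<in>I. card I \<le> a \<and> a \<le> n - 1}"

definition wt_mono :: "nat \<Rightarrow> pmono \<Rightarrow> nat" where
  "wt_mono n m = (\<Sum>I\<in>Poly_Mapping.keys m. Poly_Mapping.lookup m I * wt_var n I)"

definition in_w :: "nat \<Rightarrow> ppoly \<Rightarrow> ppoly" where
  "in_w n f = (if f = 0 then 0 else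
     (let mw = Min (wt_mono n ` Poly_Mapping.keys f) in
      \<Sum>m\<in>{m\<in>Poly_Mapping.keys f. wt_mono n m = mw}.
         Poly_Mapping.single m (Poly_Mapping.lookup f m)))"

definition in_ideal :: "nat \<Rightarrow> ppoly set \<Rightarrow> ppoly set" where
  "in_ideal n J = ideal_gen n (in_w n ` J)"

definition peval :: "(pvar \<Rightarrow> complex) \<Rightarrow> ppoly \<Rightarrow> complex" where
  "peval x f = (\<Sum>m\<in>Poly_Mapping.keys f. Poly_Mapping.lookup f m *
      (\<Prod>I\<in>Poly_Mapping.keys m. x I ^ Poly_Mapping.lookup m I))"

text \<open>Product of projective spaces P(\<wedge>^k C^n), k=1..n-1, represented by its affine
  cone: points with every k-th block nonzero (coordinates outside A_n set to 0).
  Subsets of it considered below are unions of torus orbits, i.e. correspond exactly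
  to subsets of the product of projective spaces.\<close>
definition cone :: "nat \<Rightarrow> (pvar \<Rightarrow> complex) set" where
  "cone n = {x. (\<forall>I. \<not> valid_var n I \<longrightarrow> x I = 0) \<and>
                (\<forall>k\<in>{1..n-1}. \<exists>I. valid_var n I \<and> card I = k \<and> x I \<noteq> 0)}"

definition zero_set :: "nat \<Rightarrow> ppoly set \<Rightarrow> (pvar \<Rightarrow> complex) set" where
  "zero_set n F = {x\<in>cone n. \<forall>f\<in>F. peval x f = 0}"

text \<open>Multihomogeneous polynomials (same degree in each block of variables in
  every monomial); Zariski closed subsets of the product of projective spaces.\<close>
definition block_deg :: "nat \<Rightarrow> pmono \<Rightarrow> nat" where
  "block_deg k m = (\<Sum>I\<in>{I\<in>Poly_Mapping.keys m. card I = k}. Poly_Mapping.lookup m I)"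

definition multihom :: "nat \<Rightarrow> ppoly \<Rightarrow> bool" where
  "multihom n f \<longleftrightarrow> f \<in> A_ring n \<and> (\<forall>m1\<in>Poly_Mapping.keys f. \<forall>m2\<in>Poly_Mapping.keys f.
      \<forall>k. block_deg k m1 = block_deg k m2)"

definition zariski_closed :: "nat \<Rightarrow> (pvar \<Rightarrow> complex) set \<Rightarrow> bool" where
  "zariski_closed n Z \<longleftrightarrow> (\<exists>F. (\<forall>f\<in>F. multihom n f) \<and> Z = zero_set n F)"

definition reducible :: "nat \<Rightarrow> (pvar \<Rightarrow> complex) set \<Rightarrow> bool" where
  "reducible n X \<longleftrightarrow> (\<exists>Z1 Z2. zariski_closed n Z1 \<and> zariski_closed n Z2 \<and>
       X = Z1 \<union> Z2 \<and> Z1 \<noteq> X \<and> Z2 \<noteq> X)"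

definition degenerate_schubert :: "nat \<Rightarrow> (nat \<Rightarrow> nat) \<Rightarrow> (pvar \<Rightarrow> complex) set" where
  "degenerate_schubert n v = zero_set n (in_ideal n (I_schubert n v))"

definition simple_refl :: "nat \<Rightarrow> nat \<Rightarrow> nat" where
  "simple_refl i = transpose i (Suc i)"

definition w0 :: "nat \<Rightarrow> nat \<Rightarrow> nat" where
  "w0 n = (\<lambda>j. if j \<in> {1..n} then n + 1 - j else j)"

end

theory Submission
  imports Defs "HOL-Computational_Algebra.Polynomial"
begin

definition restr :: "(pmono \<Rightarrow> bool) \<Rightarrow> ppoly \<Rightarrow> ppoly" where
  "restr P f = (\<Sum>m\<in>{m\<in>Poly_Mapping.keys f. P m}. Poly_Mapping.single m (Poly_Mapping.lookup f m))"

lemma lookup_sum_single: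
  assumes "finite A"
  shows "Poly_Mapping.lookup (\<Sum>m\<in>A. Poly_Mapping.single m (c m)) k = (if k \<in> A then c k else (0::complex))"
  using assms by (induction A rule: finite_induct) (auto simp: lookup_add lookup_single when_def)

lemma lookup_restr: "Poly_Mapping.lookup (restr P f) m = (if P m then Poly_Mapping.lookup f m else 0)"
  unfolding restr_def by (subst lookup_sum_single) (auto simp: in_keys_iff)

lemma keys_restr: "Poly_Mapping.keys (restr P f) = {m\<in>Poly_Mapping.keys f. P m}"
  by (auto simp: in_keys_iff lookup_restr split: if_splits)

lemma restr_add: "restr P (f + g) = restr P f + restr P g"
  by (rule poly_mapping_eqI) (simp add: lookup_restr lookup_add)

lemma restr_zero[simp]: "restr P 0 = 0"
  by (rule poly_mapping_eqI) (simp add: lookup_restr)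

lemma restr_sum: "restr P (\<Sum>g\<in>S. F g) = (\<Sum>g\<in>S. restr P (F g))"
  by (induction S rule: infinite_finite_induct) (auto simp: restr_add)

lemma restr_True: "restr (\<lambda>_. True) f = f"
  by (rule poly_mapping_eqI) (simp add: lookup_restr)

definition mon :: "(pvar \<Rightarrow> complex) \<Rightarrow> pmono \<Rightarrow> complex" where
  "mon x m = (\<Prod>I\<in>Poly_Mapping.keys m. x I ^ Poly_Mapping.lookup m I)"

lemma peval_mon: "peval x f = (\<Sum>m\<in>Poly_Mapping.keys f. Poly_Mapping.lookup f m * mon x m)"
  by (simp add: peval_def mon_def)

lemma peval_superset:
  assumes "finite K" "Poly_Mapping.keys f \<subseteq> K"
  shows "peval x f = (\<Sum>m\<in>K. Poly_Mapping.lookup f m * mon x m)"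
  unfolding peval_mon by (rule sum.mono_neutral_left) (use assms in \<open>auto simp: in_keys_iff\<close>)

lemma mon_superset:
  assumes "finite K" "Poly_Mapping.keys m \<subseteq> K"
  shows "mon x m = (\<Prod>I\<in>K. x I ^ Poly_Mapping.lookup m I)"
  unfolding mon_def by (rule prod.mono_neutral_left) (use assms in \<open>auto simp: in_keys_iff\<close>)

lemma keys_add_nat: "Poly_Mapping.keys (a + b :: pmono) = Poly_Mapping.keys a \<union> Poly_Mapping.keys b"
  by (auto simp: in_keys_iff lookup_add)

lemma mon_add: "mon x (a + b) = mon x a * mon x b"
proof -
  let ?K = "Poly_Mapping.keys a \<union> Poly_Mapping.keys b"
  have "mon x (a+b) = (\<Prod>I\<in>?K. x I ^ Poly_Mapping.lookup (a+b) I)"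
    by (rule mon_superset) (auto simp: keys_add_nat)
  also have "\<dots> = (\<Prod>I\<in>?K. x I ^ Poly_Mapping.lookup a I) * (\<Prod>I\<in>?K. x I ^ Poly_Mapping.lookup b I)"
    by (simp add: lookup_add power_add prod.distrib)
  also have "\<dots> = mon x a * mon x b"
    by (simp add: mon_superset[symmetric])
  finally show ?thesis .
qed

lemma mon_zero[simp]: "mon x 0 = 1" by (simp add: mon_def)

lemma peval_add: "peval x (f + g) = peval x f + peval x g"
proof -
  let ?K = "Poly_Mapping.keys f \<union> Poly_Mapping.keys g"
  have "peval x (f+g) = (\<Sum>m\<in>?K. Poly_Mapping.lookup (f+g) m * mon x m)"
    by (rule peval_superset) (use keys_add[of f g] in auto)
  also have "\<dots> = (\<Sum>m\<in>?K. Poly_Mapping.lookup f m * mon x m) + (\<Sum>m\<in>?K. Poly_Mapping.lookup g m * mon x m)"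
    by (simp add: lookup_add distrib_right sum.distrib)
  also have "\<dots> = peval x f + peval x g"
    by (simp add: peval_superset[symmetric])
  finally show ?thesis .
qed

lemma peval_zero[simp]: "peval x 0 = 0" by (simp add: peval_def)

lemma peval_sum: "peval x (\<Sum>g\<in>S. F g) = (\<Sum>g\<in>S. peval x (F g))"
  by (induction S rule: infinite_finite_induct) (auto simp: peval_add)

lemma peval_uminus: "peval x (- f) = - peval x f"
  by (simp add: peval_mon sum_negf)

lemma peval_diff: "peval x (f - g) = peval x f - peval x g"
  by (metis diff_conv_add_uminus peval_add peval_uminus)

lemma peval_single: "peval x (Poly_Mapping.single m c) = c * mon x m"
  by (simp add: peval_mon)

lemma lookup_mult_fin:
  "Poly_Mapping.lookup (f * g) k = (\<Sum>l\<in>Poly_Mapping.keys f. \<Sum>q\<in>Poly_Mapping.keys g.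
      (if k = l + q then Poly_Mapping.lookup f l * Poly_Mapping.lookup g q else (0::complex)))"
proof -
  have "Poly_Mapping.lookup (f * g) k = (\<Sum>l. Poly_Mapping.lookup f l * (\<Sum>q. Poly_Mapping.lookup g q when k = l + q))"
    by (rule lookup_mult)
  also have "\<dots> = (\<Sum>l\<in>Poly_Mapping.keys f. Poly_Mapping.lookup f l * (\<Sum>q. Poly_Mapping.lookup g q when k = l + q))"
    by (rule Sum_any.expand_superset) (auto simp: in_keys_iff)
  also have "\<dots> = (\<Sum>l\<in>Poly_Mapping.keys f. Poly_Mapping.lookup f l * (\<Sum>q\<in>Poly_Mapping.keys g. Poly_Mapping.lookup g q when k = l + q))"
    by (intro sum.cong refl arg_cong2[where f="(*)"] Sum_any.expand_superset) (auto simp: in_keys_iff)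
  also have "\<dots> = (\<Sum>l\<in>Poly_Mapping.keys f. \<Sum>q\<in>Poly_Mapping.keys g.
      (if k = l + q then Poly_Mapping.lookup f l * Poly_Mapping.lookup g q else (0::complex)))"
    by (simp add: sum_distrib_left when_def if_distrib cong: if_cong)
  finally show ?thesis .
qed

lemma peval_mult: "peval x (f * g) = peval x f * peval x g"
proof -
  let ?F = "Poly_Mapping.keys f" and ?G = "Poly_Mapping.keys g"
  define K where "K = (\<lambda>(l,q). l + q) ` (?F \<times> ?G)"
  have finK: "finite K" unfolding K_def by simp
  have subK: "Poly_Mapping.keys (f*g) \<subseteq> K"
    using keys_mult[of f g] unfolding K_def by force
  have "peval x (f*g) = (\<Sum>k\<in>K. Poly_Mapping.lookup (f*g) k * mon x k)"
    by (rule peval_superset[OF finK subK])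
  also have "\<dots> = (\<Sum>k\<in>K. \<Sum>l\<in>?F. \<Sum>q\<in>?G.
      (if k = l + q then Poly_Mapping.lookup f l * Poly_Mapping.lookup g q * mon x k else 0))"
    by (auto simp: lookup_mult_fin sum_distrib_right intro!: sum.cong)
  also have "\<dots> = (\<Sum>l\<in>?F. \<Sum>q\<in>?G. \<Sum>k\<in>K.
      (if k = l + q then Poly_Mapping.lookup f l * Poly_Mapping.lookup g q * mon x k else 0))"
    by (subst sum.swap) (simp add: sum.swap[of _ K])
  also have "\<dots> = (\<Sum>l\<in>?F. \<Sum>q\<in>?G.
      Poly_Mapping.lookup f l * Poly_Mapping.lookup g q * mon x (l + q))"
  proof (intro sum.cong refl)
    fix l q assume "l \<in> ?F" "q \<in> ?G"
    then have "l + q \<in> K" unfolding K_def by force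
    then show "(\<Sum>k\<in>K. (if k = l + q then Poly_Mapping.lookup f l * Poly_Mapping.lookup g q * mon x k else 0))
       = Poly_Mapping.lookup f l * Poly_Mapping.lookup g q * mon x (l + q)"
      using finK by (simp add: sum.delta')
  qed
  also have "\<dots> = peval x f * peval x g"
    by (simp add: peval_mon mon_add sum_product mult_ac)
  finally show ?thesis .
qed

lemma peval_one[simp]: "peval x 1 = 1"
  by (simp add: peval_mon)

lemma peval_power: "peval x (f ^ k) = peval x f ^ k"
  by (induction k) (simp_all add: peval_mult)

lemma peval_PVar: "peval x (PVar I) = x I"
  by (simp add: PVar_def peval_single mon_def)

lemma peval_neg1_power: "peval x ((-1) ^ k) = (-1) ^ k"
  by (simp add: peval_power peval_uminus)



definition good :: "nat \<Rightarrow> pmono \<Rightarrow> bool" where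
  "good n m \<longleftrightarrow> (\<forall>I\<in>Poly_Mapping.keys m. valid_var n I)"

lemma A_ring_iff: "f \<in> A_ring n \<longleftrightarrow> (\<forall>m\<in>Poly_Mapping.keys f. good n m)"
  by (simp add: A_ring_def good_def)

lemma good_add: "good n a \<Longrightarrow> good n b \<Longrightarrow> good n (a + b)"
  by (auto simp: good_def keys_add_nat)

lemma good_zero[simp]: "good n 0" by (simp add: good_def)

lemma A_ring_zero[simp]: "0 \<in> A_ring n" by (simp add: A_ring_iff)
lemma A_ring_one[simp]: "1 \<in> A_ring n" by (simp add: A_ring_iff)

lemma A_ring_single: "good n m \<Longrightarrow> Poly_Mapping.single m c \<in> A_ring n"
  by (simp add: A_ring_iff)

lemma A_ring_add: "f \<in> A_ring n \<Longrightarrow> g \<in> A_ring n \<Longrightarrow> f + g \<in> A_ring n"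
  using keys_add[of f g] by (auto simp: A_ring_iff)

lemma A_ring_sum: "(\<And>x. x \<in> S \<Longrightarrow> F x \<in> A_ring n) \<Longrightarrow> (\<Sum>x\<in>S. F x) \<in> A_ring n"
  by (induction S rule: infinite_finite_induct) (auto intro: A_ring_add)

lemma A_ring_uminus: "f \<in> A_ring n \<Longrightarrow> - f \<in> A_ring n"
  by (simp add: A_ring_iff)

lemma A_ring_diff: "f \<in> A_ring n \<Longrightarrow> g \<in> A_ring n \<Longrightarrow> f - g \<in> A_ring n"
  by (metis diff_conv_add_uminus A_ring_add A_ring_uminus)

lemma A_ring_mult: "f \<in> A_ring n \<Longrightarrow> g \<in> A_ring n \<Longrightarrow> f * g \<in> A_ring n"
  using keys_mult[of f g] by (auto simp: A_ring_iff intro!: good_add)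

lemma A_ring_power: "f \<in> A_ring n \<Longrightarrow> f ^ k \<in> A_ring n"
  by (induction k) (auto intro: A_ring_mult)

lemma A_ring_restr: "f \<in> A_ring n \<Longrightarrow> restr P f \<in> A_ring n"
  by (simp add: A_ring_iff keys_restr)

lemma A_ring_PVar: "valid_var n I \<Longrightarrow> PVar I \<in> A_ring n"
  by (simp add: PVar_def A_ring_single good_def)

lemma ideal_genI:
  assumes "finite S" "S \<subseteq> G" "\<And>g. g\<in>S \<Longrightarrow> c g \<in> A_ring n" "f = (\<Sum>g\<in>S. c g * g)"
  shows "f \<in> ideal_gen n G"
  unfolding ideal_gen_def using assms by blast

lemma ideal_genE:
  assumes "f \<in> ideal_gen n G"
  obtains S c where "finite S" "S \<subseteq> G" "\<forall>g\<in>S. c g \<in> A_ring n" "f = (\<Sum>g\<in>S. c g * g)"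
  using assms unfolding ideal_gen_def by blast

lemma ideal_gen_gen: "g \<in> G \<Longrightarrow> g \<in> ideal_gen n G"
  unfolding ideal_gen_def by (intro CollectI exI[of _ "{g}"] exI[of _ "\<lambda>_. 1"]) simp

lemma ideal_gen_zero: "0 \<in> ideal_gen n G"
  unfolding ideal_gen_def by (rule CollectI, rule exI[of _ "{}"]) simp

lemma sum_if_restrict:
  assumes "finite S" "S1 \<subseteq> S"
  shows "(\<Sum>g\<in>S. (if g \<in> S1 then c g else 0) * (g::ppoly)) = (\<Sum>g\<in>S1. c g * g)"
proof -
  have "(\<Sum>g\<in>S. (if g \<in> S1 then c g else 0) * g) = (\<Sum>g\<in>S. if g \<in> S1 then c g * g else 0)"
    by (rule sum.cong) auto
  also have "\<dots> = (\<Sum>g\<in>{g\<in>S. g \<in> S1}. c g * g)"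
    using assms by (simp add: sum.inter_filter)
  also have "{g\<in>S. g \<in> S1} = S1" using assms by auto
  finally show ?thesis .
qed

lemma ideal_gen_add:
  assumes "f1 \<in> ideal_gen n G" "f2 \<in> ideal_gen n G"
  shows "f1 + f2 \<in> ideal_gen n G"
proof -
  obtain S1 c1 where 1: "finite S1" "S1 \<subseteq> G" "\<forall>g\<in>S1. c1 g \<in> A_ring n" "f1 = (\<Sum>g\<in>S1. c1 g * g)"
    using assms(1) by (rule ideal_genE)
  obtain S2 c2 where 2: "finite S2" "S2 \<subseteq> G" "\<forall>g\<in>S2. c2 g \<in> A_ring n" "f2 = (\<Sum>g\<in>S2. c2 g * g)"
    using assms(2) by (rule ideal_genE)
  define c where "c g = (if g \<in> S1 then c1 g else 0) + (if g \<in> S2 then c2 g else 0)" for g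
  have "(\<Sum>g\<in>S1 \<union> S2. c g * g) = (\<Sum>g\<in>S1 \<union> S2. (if g \<in> S1 then c1 g else 0) * g)
        + (\<Sum>g\<in>S1 \<union> S2. (if g \<in> S2 then c2 g else 0) * g)"
    by (simp add: c_def distrib_right sum.distrib)
  also have "\<dots> = f1 + f2"
    using 1 2 by (simp add: sum_if_restrict)
  finally have "f1 + f2 = (\<Sum>g\<in>S1 \<union> S2. c g * g)" by simp
  moreover have "\<forall>g\<in>S1 \<union> S2. c g \<in> A_ring n"
    using 1 2 by (auto simp: c_def intro!: A_ring_add)
  ultimately show ?thesis
    using 1 2 by (intro ideal_genI[where S="S1 \<union> S2" and c=c]) auto
qed

lemma ideal_gen_sum: "(\<And>x. x \<in> S \<Longrightarrow> F x \<in> ideal_gen n G) \<Longrightarrow> (\<Sum>x\<in>S. F x) \<in> ideal_gen n G"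
  by (induction S rule: infinite_finite_induct) (auto intro: ideal_gen_add ideal_gen_zero)

lemma ideal_gen_smult:
  assumes "a \<in> A_ring n" "f \<in> ideal_gen n G"
  shows "a * f \<in> ideal_gen n G"
proof -
  obtain S c where 1: "finite S" "S \<subseteq> G" "\<forall>g\<in>S. c g \<in> A_ring n" "f = (\<Sum>g\<in>S. c g * g)"
    using assms(2) by (rule ideal_genE)
  have "a * f = (\<Sum>g\<in>S. (a * c g) * g)"
    by (simp add: 1(4) sum_distrib_left mult.assoc)
  moreover have "\<forall>g\<in>S. a * c g \<in> A_ring n" using 1 assms(1) by (auto intro: A_ring_mult)
  ultimately show ?thesis using 1 by (intro ideal_genI[where S=S and c="\<lambda>g. a * c g"]) auto
qed

lemma ideal_gen_uminus: "f \<in> ideal_gen n G \<Longrightarrow> - f \<in> ideal_gen n G"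
  using ideal_gen_smult[of "-1" n f G] by (simp add: A_ring_uminus)

lemma ideal_gen_diff: "f \<in> ideal_gen n G \<Longrightarrow> g \<in> ideal_gen n G \<Longrightarrow> f - g \<in> ideal_gen n G"
  by (metis diff_conv_add_uminus ideal_gen_add ideal_gen_uminus)

lemma ideal_gen_peval:
  assumes "f \<in> ideal_gen n G" "\<And>g. g \<in> G \<Longrightarrow> peval x g = 0"
  shows "peval x f = 0"
proof -
  obtain S c where 1: "finite S" "S \<subseteq> G" "\<forall>g\<in>S. c g \<in> A_ring n" "f = (\<Sum>g\<in>S. c g * g)"
    using assms(1) by (rule ideal_genE)
  show ?thesis using 1 assms(2) by (auto simp: peval_sum peval_mult intro!: sum.neutral)
qed

lemma ideal_gen_A_ring:
  assumes "f \<in> ideal_gen n G" "G \<subseteq> A_ring n"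
  shows "f \<in> A_ring n"
proof -
  obtain S c where 1: "finite S" "S \<subseteq> G" "\<forall>g\<in>S. c g \<in> A_ring n" "f = (\<Sum>g\<in>S. c g * g)"
    using assms(1) by (rule ideal_genE)
  show ?thesis using 1 assms(2) by (auto intro!: A_ring_sum A_ring_mult)
qed



definition isdeg :: "(nat \<Rightarrow> nat) \<Rightarrow> pmono \<Rightarrow> bool" where
  "isdeg d m \<longleftrightarrow> (\<forall>k. block_deg k m = d k)"

definition hom_deg :: "ppoly \<Rightarrow> (nat \<Rightarrow> nat) \<Rightarrow> bool" where
  "hom_deg g d \<longleftrightarrow> (\<forall>m\<in>Poly_Mapping.keys g. isdeg d m)"

lemma block_deg_add: "block_deg k (a + b) = block_deg k a + block_deg k b"
proof -
  let ?K = "{I \<in> Poly_Mapping.keys a \<union> Poly_Mapping.keys b. card I = k}"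
  have fin: "finite ?K" by auto
  have "block_deg k (a+b) = (\<Sum>I\<in>?K. Poly_Mapping.lookup (a+b) I)"
    unfolding block_deg_def by (rule sum.cong) (auto simp: keys_add_nat)
  also have "\<dots> = (\<Sum>I\<in>?K. Poly_Mapping.lookup a I) + (\<Sum>I\<in>?K. Poly_Mapping.lookup b I)"
    by (simp add: lookup_add sum.distrib)
  also have "(\<Sum>I\<in>?K. Poly_Mapping.lookup a I) = block_deg k a"
    unfolding block_deg_def by (rule sum.mono_neutral_right) (auto simp: in_keys_iff)
  also have "(\<Sum>I\<in>?K. Poly_Mapping.lookup b I) = block_deg k b"
    unfolding block_deg_def by (rule sum.mono_neutral_right) (auto simp: in_keys_iff)
  finally show ?thesis .
qed

lemma lookup_mult_super:
  assumes "finite F" "Poly_Mapping.keys f \<subseteq> F" "finite G" "Poly_Mapping.keys g \<subseteq> G"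
  shows "Poly_Mapping.lookup (f * g) k = (\<Sum>l\<in>F. \<Sum>q\<in>G.
      (if k = l + q then Poly_Mapping.lookup f l * Poly_Mapping.lookup g q else (0::complex)))"
proof -
  have "Poly_Mapping.lookup (f * g) k = (\<Sum>l\<in>Poly_Mapping.keys f. \<Sum>q\<in>Poly_Mapping.keys g.
      (if k = l + q then Poly_Mapping.lookup f l * Poly_Mapping.lookup g q else (0::complex)))"
    by (rule lookup_mult_fin)
  also have "\<dots> = (\<Sum>l\<in>F. \<Sum>q\<in>Poly_Mapping.keys g.
      (if k = l + q then Poly_Mapping.lookup f l * Poly_Mapping.lookup g q else (0::complex)))"
    by (rule sum.mono_neutral_left) (use assms in \<open>auto simp: in_keys_iff intro!: sum.neutral\<close>)
  also have "\<dots> = (\<Sum>l\<in>F. \<Sum>q\<in>G.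
      (if k = l + q then Poly_Mapping.lookup f l * Poly_Mapping.lookup g q else (0::complex)))"
    apply (rule sum.cong[OF refl])
    apply (rule sum.mono_neutral_left)
    using assms by (auto simp: in_keys_iff)
  finally show ?thesis .
qed

lemma restr_mult_hom:
  assumes "hom_deg g \<delta>"
  shows "restr (isdeg d) (c * g) = restr (\<lambda>m. \<forall>k. block_deg k m + \<delta> k = d k) c * g"
proof (rule poly_mapping_eqI)
  fix k0
  let ?P = "\<lambda>m. \<forall>k. block_deg k m + \<delta> k = d k"
  let ?C = "Poly_Mapping.keys c" and ?G = "Poly_Mapping.keys g"
  have key: "isdeg d (l + q) \<longleftrightarrow> ?P l" if "q \<in> ?G" for l q
    using assms that by (auto simp: hom_deg_def isdeg_def block_deg_add)
  have "Poly_Mapping.lookup (restr ?P c * g) k0 = (\<Sum>l\<in>?C. \<Sum>q\<in>?G.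
      (if k0 = l + q then Poly_Mapping.lookup (restr ?P c) l * Poly_Mapping.lookup g q else 0))"
    by (rule lookup_mult_super) (auto simp: keys_restr)
  also have "\<dots> = (\<Sum>l\<in>?C. \<Sum>q\<in>?G. (if isdeg d k0 then
      (if k0 = l + q then Poly_Mapping.lookup c l * Poly_Mapping.lookup g q else 0) else 0))"
    by (intro sum.cong refl) (auto simp: lookup_restr key)
  also have "\<dots> = Poly_Mapping.lookup (restr (isdeg d) (c * g)) k0"
    by (simp add: lookup_restr lookup_mult_fin)
  finally show "Poly_Mapping.lookup (restr (isdeg d) (c * g)) k0 = Poly_Mapping.lookup (restr ?P c * g) k0"
    by simp
qed

lemma multihom_hom_deg:
  assumes "multihom n g"
  obtains \<delta> where "hom_deg g \<delta>"
proof (cases "Poly_Mapping.keys g = {}")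
  case True then show ?thesis using that by (simp add: hom_deg_def)
next
  case False
  then obtain m0 where "m0 \<in> Poly_Mapping.keys g" by blast
  have "\<forall>m1\<in>Poly_Mapping.keys g. \<forall>m2\<in>Poly_Mapping.keys g. \<forall>k. block_deg k m1 = block_deg k m2"
    using assms unfolding multihom_def by blast
  then have "hom_deg g (\<lambda>k. block_deg k m0)"
    using \<open>m0 \<in> Poly_Mapping.keys g\<close> unfolding hom_deg_def isdeg_def by metis
  then show ?thesis using that by blast
qed

lemma multihom_A_ring: "multihom n g \<Longrightarrow> g \<in> A_ring n"
  unfolding multihom_def by (rule conjunct1)

lemma ideal_gen_component:
  assumes "\<And>g. g \<in> G \<Longrightarrow> multihom n g" "f \<in> ideal_gen n G"
  shows "restr (isdeg d) f \<in> ideal_gen n G"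
proof -
  obtain S c where 1: "finite S" "S \<subseteq> G" "\<forall>g\<in>S. c g \<in> A_ring n" "f = (\<Sum>g\<in>S. c g * g)"
    using assms(2) by (rule ideal_genE)
  define \<delta> where "\<delta> g = (SOME \<delta>. hom_deg g \<delta>)" for g
  have hd: "hom_deg g (\<delta> g)" if "g \<in> S" for g
  proof -
    have "multihom n g" using assms(1) 1(2) that by blast
    then obtain e where "hom_deg g e" by (rule multihom_hom_deg)
    then show ?thesis unfolding \<delta>_def by (rule someI[of "hom_deg g"])
  qed
  define c' where "c' g = restr (\<lambda>m. \<forall>k. block_deg k m + \<delta> g k = d k) (c g)" for g
  have "restr (isdeg d) f = (\<Sum>g\<in>S. c' g * g)"
    unfolding 1(4) restr_sum c'_def by (intro sum.cong refl restr_mult_hom hd)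
  then show ?thesis
    using 1 by (intro ideal_genI[where S=S and c=c']) (auto simp: c'_def intro: A_ring_restr)
qed

lemma in_w_restr: "in_w n f = restr (\<lambda>m. wt_mono n m = Min (wt_mono n ` Poly_Mapping.keys f)) f"
  by (simp add: in_w_def restr_def Let_def)

lemma restr_restr: "restr P (restr Q f) = restr (\<lambda>m. P m \<and> Q m) f"
  by (rule poly_mapping_eqI) (simp add: lookup_restr)

lemma restr_decomp:
  "f = (\<Sum>d\<in>(\<lambda>m k. block_deg k m) ` Poly_Mapping.keys f. restr (isdeg d) f)"
proof (rule poly_mapping_eqI)
  fix m
  let ?D = "(\<lambda>m k. block_deg k m) ` Poly_Mapping.keys f"
  have "Poly_Mapping.lookup (\<Sum>d\<in>?D. restr (isdeg d) f) m
      = (\<Sum>d\<in>?D. if d = (\<lambda>k. block_deg k m) then Poly_Mapping.lookup f m else 0)"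
    by (simp add: lookup_sum lookup_restr isdeg_def fun_eq_iff eq_commute)
  also have "\<dots> = Poly_Mapping.lookup f m"
    by (auto simp: in_keys_iff)
  finally show "Poly_Mapping.lookup f m = Poly_Mapping.lookup (\<Sum>d\<in>?D. restr (isdeg d) f) m" by simp
qed

lemma in_ideal_multihom_vanish:
  assumes gens: "\<And>g. g \<in> G \<Longrightarrow> multihom n g"
    and van: "\<And>h. h \<in> in_ideal n (ideal_gen n G) \<Longrightarrow> multihom n h \<Longrightarrow> peval x h = 0"
    and h: "h \<in> in_ideal n (ideal_gen n G)"
  shows "peval x h = 0"
  using h unfolding in_ideal_def
proof (rule ideal_gen_peval)
  fix g assume "g \<in> in_w n ` ideal_gen n G"
  then obtain f where f: "f \<in> ideal_gen n G" and g: "g = in_w n f" by blast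
  have fA: "f \<in> A_ring n" using f by (rule ideal_gen_A_ring) (auto intro: multihom_A_ring gens)
  define mw where "mw = Min (wt_mono n ` Poly_Mapping.keys f)"
  let ?W = "\<lambda>m. wt_mono n m = mw"
  have gr: "g = restr ?W f" unfolding g in_w_restr mw_def ..
  have "g = (\<Sum>d\<in>(\<lambda>m k. block_deg k m) ` Poly_Mapping.keys g. restr (isdeg d) g)"
    by (rule restr_decomp)
  then have "peval x g = (\<Sum>d\<in>(\<lambda>m k. block_deg k m) ` Poly_Mapping.keys g. peval x (restr (isdeg d) g))"
    by (metis peval_sum)
  also have "\<dots> = 0"
  proof (rule sum.neutral, rule ballI)
    fix d assume "d \<in> (\<lambda>m k. block_deg k m) ` Poly_Mapping.keys g"
    then obtain m0 where m0: "m0 \<in> Poly_Mapping.keys g" "d = (\<lambda>k. block_deg k m0)" by blast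
    have m0f: "m0 \<in> Poly_Mapping.keys f" "?W m0" "isdeg d m0"
      using m0 by (auto simp: gr keys_restr isdeg_def)
    define fd where "fd = restr (isdeg d) f"
    have fdI: "fd \<in> ideal_gen n G" unfolding fd_def by (rule ideal_gen_component[OF gens f])
    have kfd: "Poly_Mapping.keys fd = {m \<in> Poly_Mapping.keys f. isdeg d m}"
      by (simp add: fd_def keys_restr)
    have "Min (wt_mono n ` Poly_Mapping.keys fd) = mw"
    proof (rule antisym)
      show "Min (wt_mono n ` Poly_Mapping.keys fd) \<le> mw"
        using m0f kfd by (intro Min_le) auto
      show "mw \<le> Min (wt_mono n ` Poly_Mapping.keys fd)"
        using m0f kfd unfolding mw_def by (intro Min.boundedI) (auto intro: Min_le)
    qed
    then have "in_w n fd = restr ?W fd" by (simp add: in_w_restr)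
    also have "\<dots> = restr (isdeg d) g"
      by (simp add: fd_def gr restr_restr conj_commute)
    finally have eq: "restr (isdeg d) g = in_w n fd" by simp
    have "in_w n fd \<in> in_ideal n (ideal_gen n G)"
      unfolding in_ideal_def using fdI by (intro ideal_gen_gen) blast
    moreover have "multihom n (in_w n fd)"
      unfolding eq[symmetric] multihom_def
    proof (intro conjI ballI allI)
      show "restr (isdeg d) g \<in> A_ring n" unfolding gr by (intro A_ring_restr fA)
    next
      fix m1 m2 k assume "m1 \<in> Poly_Mapping.keys (restr (isdeg d) g)" "m2 \<in> Poly_Mapping.keys (restr (isdeg d) g)"
      then show "block_deg k m1 = block_deg k m2" by (auto simp: keys_restr isdeg_def)
    qed
    ultimately show "peval x (restr (isdeg d) g) = 0" using van eq by simp
  qed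
  finally show "peval x g = 0" .
qed



definition pairs :: "nat \<Rightarrow> (nat \<times> nat) set" where
  "pairs m = {(a, b). a < b \<and> b < m}"

definition sig :: "nat list \<Rightarrow> nat \<Rightarrow> nat \<Rightarrow> complex" where
  "sig zs a b = (if zs ! a > zs ! b then -1 else 1)"

lemma finite_pairs[simp]: "finite (pairs m)"
  by (rule finite_subset[of _ "{..<m} \<times> {..<m}"]) (auto simp: pairs_def)

lemma sig_sq: "sig zs a b * sig zs a b = 1"
  by (simp add: sig_def)

lemma prod_sig_sq: "(\<Prod>p\<in>T. sig zs (fst p) (snd p)) * (\<Prod>p\<in>T. sig zs (fst p) (snd p)) = 1"
  by (simp add: prod.distrib[symmetric] sig_sq)

lemma neg1_pow_card:
  assumes "finite T"
  shows "(-1::complex) ^ card {p\<in>T. Q p} = (\<Prod>p\<in>T. if Q p then -1 else 1)"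
proof -
  have "(\<Prod>p\<in>T. if Q p then -1 else (1::complex)) = (\<Prod>p\<in>T \<inter> {p. Q p}. -1) * (\<Prod>p\<in>T \<inter> - {p. Q p}. 1)"
    by (rule prod.If_cases[OF assms])
  also have "\<dots> = (-1) ^ card (T \<inter> {p. Q p})" by simp
  also have "T \<inter> {p. Q p} = {p\<in>T. Q p}" by auto
  finally show ?thesis by simp
qed

lemma sgn_prod: "(-1::complex) ^ inversions zs = (\<Prod>p\<in>pairs (length zs). sig zs (fst p) (snd p))"
proof -
  have "inversions zs = card {p\<in>pairs (length zs). zs ! fst p > zs ! snd p}"
    unfolding inversions_def pairs_def by (rule arg_cong[where f=card]) auto
  then show ?thesis by (simp add: neg1_pow_card sig_def)
qed

definition sg2 :: "nat \<Rightarrow> nat \<Rightarrow> complex" where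
  "sg2 u v = (if u < v then 1 else -1)"

lemma block_sign:
  assumes len: "length xs = m" "length ys = m"
    and dx: "distinct xs" and dy: "distinct ys"
    and P: "P \<subseteq> {..<m}"
    and out: "\<And>q. q < m \<Longrightarrow> q \<notin> P \<Longrightarrow> xs ! q = ys ! q"
    and img: "(\<lambda>p. xs ! p) ` P = (\<lambda>p. ys ! p) ` P"
  shows "(-1::complex) ^ inversions xs * (-1) ^ inversions ys =
     (\<Prod>p\<in>pairs m \<inter> (P \<times> P). sig xs (fst p) (snd p) * sig ys (fst p) (snd p))"
proof -
  define Q where "Q = {..<m} - P"
  let ?PP = "pairs m \<inter> (P \<times> P)"
  let ?OO = "pairs m \<inter> (Q \<times> Q)"
  let ?MX = "pairs m - ?PP - ?OO"
  define S where "S zs T = (\<Prod>p\<in>T. sig zs (fst p) (snd p))" for zs T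
  have finP: "finite P" using P finite_subset by blast
  have split: "S zs (pairs m) = S zs ?PP * S zs ?OO * S zs ?MX" for zs
  proof -
    have "pairs m = ?PP \<union> ?OO \<union> ?MX" by auto
    moreover have "S zs (?PP \<union> ?OO \<union> ?MX) = S zs (?PP \<union> ?OO) * S zs ?MX"
      unfolding S_def by (rule prod.union_disjoint) auto
    moreover have "S zs (?PP \<union> ?OO) = S zs ?PP * S zs ?OO"
      unfolding S_def by (rule prod.union_disjoint) (auto simp: Q_def)
    ultimately show ?thesis by metis
  qed
  have OO: "S xs ?OO = S ys ?OO"
    unfolding S_def sig_def by (rule prod.cong) (auto simp: Q_def pairs_def out)
  have mixed: "S zs ?MX = (\<Prod>q\<in>Q. \<Prod>p\<in>P. sg2 p q * sg2 (zs ! p) (zs ! q))"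
    if dz: "distinct zs" "length zs = m" for zs
  proof -
    let ?A = "{(a, b). a \<in> P \<and> b \<in> Q \<and> a < b}"
    let ?B = "{(a, b). a \<in> P \<and> b \<in> Q \<and> b < a}"
    have MX: "?MX = ?A \<union> prod.swap ` ?B"
      using P by (auto simp: pairs_def Q_def image_iff)
    have finA: "finite ?A" by (rule finite_subset[of _ "P \<times> Q"]) (auto simp: Q_def finP)
    have finB: "finite ?B" by (rule finite_subset[of _ "P \<times> Q"]) (auto simp: Q_def finP)
    have "S zs ?MX = S zs ?A * S zs (prod.swap ` ?B)"
      unfolding MX S_def by (rule prod.union_disjoint) (use finA finB in \<open>auto simp: Q_def\<close>)
    also have "S zs (prod.swap ` ?B) = (\<Prod>p\<in>?B. sig zs (snd p) (fst p))"
      unfolding S_def by (subst prod.reindex) (auto simp: inj_on_def)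
    finally have 1: "S zs ?MX = (\<Prod>p\<in>?A. sig zs (fst p) (snd p)) * (\<Prod>p\<in>?B. sig zs (snd p) (fst p))"
      by (simp add: S_def)
    have "(\<Prod>p\<in>P \<times> Q. sg2 (fst p) (snd p) * sg2 (zs ! fst p) (zs ! snd p))
        = (\<Prod>p\<in>P \<times> Q. if fst p < snd p then sig zs (fst p) (snd p) else sig zs (snd p) (fst p))"
    proof (rule prod.cong[OF refl])
      fix p assume p: "p \<in> P \<times> Q"
      then have ne: "fst p \<noteq> snd p" by (auto simp: Q_def)
      have lt: "fst p < m" "snd p < m" using p P by (auto simp: Q_def)
      have "zs ! fst p \<noteq> zs ! snd p" using dz ne lt by (simp add: nth_eq_iff_index_eq)
      then show "sg2 (fst p) (snd p) * sg2 (zs ! fst p) (zs ! snd p) =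
          (if fst p < snd p then sig zs (fst p) (snd p) else sig zs (snd p) (fst p))"
        using ne by (auto simp: sg2_def sig_def)
    qed
    also have "\<dots> = (\<Prod>p\<in>(P \<times> Q) \<inter> {p. fst p < snd p}. sig zs (fst p) (snd p)) *
         (\<Prod>p\<in>(P \<times> Q) \<inter> - {p. fst p < snd p}. sig zs (snd p) (fst p))"
      by (rule prod.If_cases) (auto simp: Q_def finP)
    also have "(P \<times> Q) \<inter> {p. fst p < snd p} = ?A" by auto
    also have "(P \<times> Q) \<inter> - {p. fst p < snd p} = ?B"
      by (auto simp: Q_def) (metis linorder_neqE_nat)
    finally have 2: "(\<Prod>p\<in>P \<times> Q. sg2 (fst p) (snd p) * sg2 (zs ! fst p) (zs ! snd p)) = S zs ?MX"
      using 1 by simp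
    have "(\<Prod>p\<in>P \<times> Q. sg2 (fst p) (snd p) * sg2 (zs ! fst p) (zs ! snd p))
        = (\<Prod>p\<in>P. \<Prod>q\<in>Q. sg2 p q * sg2 (zs ! p) (zs ! q))"
      by (simp add: prod.cartesian_product case_prod_beta')
    also have "\<dots> = (\<Prod>q\<in>Q. \<Prod>p\<in>P. sg2 p q * sg2 (zs ! p) (zs ! q))"
      by (rule prod.swap)
    finally show ?thesis using 2 by simp
  qed
  have inner: "(\<Prod>p\<in>P. sg2 (xs ! p) v) = (\<Prod>p\<in>P. sg2 (ys ! p) v)" for v
  proof -
    have ix: "inj_on (\<lambda>p. xs ! p) P" using dx P len unfolding inj_on_def
      by (metis lessThan_iff nth_eq_iff_index_eq subsetD)
    have iy: "inj_on (\<lambda>p. ys ! p) P" using dy P len unfolding inj_on_def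
      by (metis lessThan_iff nth_eq_iff_index_eq subsetD)
    have "(\<Prod>p\<in>P. sg2 (xs ! p) v) = (\<Prod>u\<in>(\<lambda>p. xs ! p) ` P. sg2 u v)"
      by (simp add: prod.reindex[OF ix])
    also have "\<dots> = (\<Prod>u\<in>(\<lambda>p. ys ! p) ` P. sg2 u v)" by (simp add: img)
    also have "\<dots> = (\<Prod>p\<in>P. sg2 (ys ! p) v)"
      by (simp add: prod.reindex[OF iy])
    finally show ?thesis .
  qed
  have MXeq: "S xs ?MX = S ys ?MX"
  proof -
    have "S xs ?MX = (\<Prod>q\<in>Q. \<Prod>p\<in>P. sg2 p q * sg2 (xs ! p) (xs ! q))"
      by (rule mixed) (use dx len in auto)
    also have "\<dots> = (\<Prod>q\<in>Q. (\<Prod>p\<in>P. sg2 p q) * (\<Prod>p\<in>P. sg2 (xs ! p) (xs ! q)))"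
      by (simp add: prod.distrib)
    also have "\<dots> = (\<Prod>q\<in>Q. (\<Prod>p\<in>P. sg2 p q) * (\<Prod>p\<in>P. sg2 (ys ! p) (ys ! q)))"
      by (rule prod.cong[OF refl]) (auto simp: inner Q_def out)
    also have "\<dots> = (\<Prod>q\<in>Q. \<Prod>p\<in>P. sg2 p q * sg2 (ys ! p) (ys ! q))"
      by (simp add: prod.distrib)
    also have "\<dots> = S ys ?MX"
      by (rule mixed[symmetric]) (use dy len in auto)
    finally show ?thesis .
  qed
  have "(-1::complex) ^ inversions xs * (-1) ^ inversions ys = S xs (pairs m) * S ys (pairs m)"
    by (simp add: sgn_prod S_def len)
  also have "\<dots> = (S xs ?PP * S ys ?PP) * (S ys ?OO * S ys ?OO) * (S ys ?MX * S ys ?MX)"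
    by (simp add: split OO MXeq mult_ac)
  also have "\<dots> = S xs ?PP * S ys ?PP"
    by (simp add: S_def prod_sig_sq)
  also have "\<dots> = (\<Prod>p\<in>?PP. sig xs (fst p) (snd p) * sig ys (fst p) (snd p))"
    by (simp add: S_def prod.distrib)
  finally show ?thesis .
qed



lemma length_J_repl: "k \<le> length J \<Longrightarrow> length (J_repl k J L rs) = length J"
  by (simp add: J_repl_def)

lemma nth_J_repl1: "t < k \<Longrightarrow> k \<le> length J \<Longrightarrow> J_repl k J L rs ! t = L ! (rs ! t)"
  by (simp add: J_repl_def nth_append)

lemma nth_J_repl2: "k \<le> t \<Longrightarrow> t < length J \<Longrightarrow> J_repl k J L rs ! t = J ! t"
  by (simp add: J_repl_def nth_append)

lemma L_repl_Suc: "L_repl (Suc k) J L rs = (L_repl k J L rs)[rs ! k := J ! k]"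
  by (simp add: L_repl_def)

lemma L_repl_props:
  assumes "distinct rs" "k \<le> length rs" "\<forall>t<length rs. rs ! t < length L"
  shows "length (L_repl k J L rs) = length L \<and>
    (\<forall>t<k. L_repl k J L rs ! (rs ! t) = J ! t) \<and>
    (\<forall>p. p \<notin> (\<lambda>t. rs ! t) ` {..<k} \<longrightarrow> L_repl k J L rs ! p = L ! p)"
  using assms(2)
proof (induction k)
  case 0 then show ?case by (simp add: L_repl_def)
next
  case (Suc k)
  then have IH: "length (L_repl k J L rs) = length L"
    "\<forall>t<k. L_repl k J L rs ! (rs ! t) = J ! t"
    "\<forall>p. p \<notin> (\<lambda>t. rs ! t) ` {..<k} \<longrightarrow> L_repl k J L rs ! p = L ! p" by auto
  have kl: "k < length rs" using Suc.prems by simp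
  have rsk: "rs ! k < length L" using assms(3) kl by simp
  have ne: "rs ! t \<noteq> rs ! k" if "t < k" for t
    using assms(1) kl that by (simp add: nth_eq_iff_index_eq)
  show ?case
  proof (intro conjI allI impI)
    show "length (L_repl (Suc k) J L rs) = length L" by (simp add: L_repl_Suc IH)
  next
    fix t assume "t < Suc k"
    then show "L_repl (Suc k) J L rs ! (rs ! t) = J ! t"
    proof (cases "t = k")
      case True then show ?thesis using IH rsk by (simp add: L_repl_Suc)
    next
      case False
      then have "t < k" using \<open>t < Suc k\<close> by simp
      then show ?thesis using IH ne[of t] by (simp add: L_repl_Suc nth_list_update)
    qed
  next
    fix p assume "p \<notin> (\<lambda>t. rs ! t) ` {..<Suc k}"
    then have "p \<noteq> rs ! k" "p \<notin> (\<lambda>t. rs ! t) ` {..<k}" by auto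
    then show "L_repl (Suc k) J L rs ! p = L ! p"
      using IH by (simp add: L_repl_Suc nth_list_update)
  qed
qed

definition RS :: "nat \<Rightarrow> nat \<Rightarrow> nat list set" where
  "RS k d = {rs. sorted_wrt (<) rs \<and> length rs = k \<and> set rs \<subseteq> {..<d}}"

lemma RS_facts:
  assumes "rs \<in> RS k d"
  shows "distinct rs" "length rs = k" "\<And>t. t < k \<Longrightarrow> rs ! t < d"
    "\<And>s t. s < t \<Longrightarrow> t < k \<Longrightarrow> rs ! s < rs ! t"
  using assms unfolding RS_def
  by (auto simp: strict_sorted_iff sorted_wrt_nth_less dest!: nth_mem)

lemma L_repl_facts:
  assumes "rs \<in> RS k (length L)"
  shows "length (L_repl k J L rs) = length L"
    "\<And>t. t < k \<Longrightarrow> L_repl k J L rs ! (rs ! t) = J ! t"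
    "\<And>p. p \<notin> set rs \<Longrightarrow> L_repl k J L rs ! p = L ! p"
proof -
  note R = RS_facts[OF assms]
  have P: "length (L_repl k J L rs) = length L \<and>
    (\<forall>t<k. L_repl k J L rs ! (rs ! t) = J ! t) \<and>
    (\<forall>p. p \<notin> (\<lambda>t. rs ! t) ` {..<k} \<longrightarrow> L_repl k J L rs ! p = L ! p)"
    by (rule L_repl_props) (use R in auto)
  have S: "set rs = (\<lambda>t. rs ! t) ` {..<k}" using R(2) by (auto simp: set_conv_nth)
  show "length (L_repl k J L rs) = length L" using P by simp
  show "\<And>t. t < k \<Longrightarrow> L_repl k J L rs ! (rs ! t) = J ! t" using P by simp
  show "\<And>p. p \<notin> set rs \<Longrightarrow> L_repl k J L rs ! p = L ! p" using P S by simp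
qed



definition sgnl :: "nat list \<Rightarrow> complex" where "sgnl zs = (-1) ^ inversions zs"

lemma sgnl_sq: "sgnl zs * sgnl zs = 1"
  by (simp add: sgnl_def power_mult_distrib[symmetric])

lemma core_W:
  assumes dJ: "distinct J" and dL: "distinct L" and kJ: "k \<le> length J"
    and rs: "rs \<in> RS k (length L)"
    and AB: "set (take k J) = (\<lambda>t. L ! (rs ! t)) ` {..<k}"
  defines "J' \<equiv> J_repl k J L rs" and "L' \<equiv> L_repl k J L rs"
  shows "distinct J'" "set J' = set J" "distinct L'" "set L' = set L"
    "sgnl J' * sgnl L' = sgnl J * sgnl L"
proof -
  let ?e = "length J" and ?d = "length L"
  note R = RS_facts[OF rs]
  note LR = L_repl_facts[OF rs, where J=J, folded L'_def]
  define A where "A = set (take k J)"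
  define B where "B = (\<lambda>t. L ! (rs ! t)) ` {..<k}"
  have AB': "A = B" using AB by (simp add: A_def B_def)
  have Aeq: "A = (\<lambda>t. J ! t) ` {..<k}" unfolding A_def using kJ
    by (auto simp: set_conv_nth) (metis nth_take)
  have J'def: "J' = map (\<lambda>t. L ! (rs ! t)) [0..<k] @ drop k J"
    by (simp add: J'_def J_repl_def)
  have injB: "inj_on (\<lambda>t. L ! (rs ! t)) {..<k}"
  proof (rule inj_onI)
    fix s t assume st: "s \<in> {..<k}" "t \<in> {..<k}" "L ! (rs ! s) = L ! (rs ! t)"
    then have "rs ! s = rs ! t" using dL R(3) by (simp add: nth_eq_iff_index_eq)
    then show "s = t" using R(1,2) st by (simp add: nth_eq_iff_index_eq)
  qed
  have disj: "set (take k J) \<inter> set (drop k J) = {}"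
    using dJ by (metis append_take_drop_id distinct_append)
  show dJ': "distinct J'"
    unfolding J'def distinct_append
  proof (intro conjI)
    show "distinct (map (\<lambda>t. L ! (rs ! t)) [0..<k])"
      using injB by (simp add: distinct_map lessThan_atLeast0)
    show "distinct (drop k J)" using dJ by simp
    show "set (map (\<lambda>t. L ! (rs ! t)) [0..<k]) \<inter> set (drop k J) = {}"
      using disj AB by (simp add: lessThan_atLeast0)
  qed
  show sJ': "set J' = set J"
  proof -
    have "set J' = B \<union> set (drop k J)" by (simp add: J'def B_def lessThan_atLeast0)
    also have "\<dots> = A \<union> set (drop k J)" by (simp add: AB')
    also have "\<dots> = set J" unfolding A_def by (metis append_take_drop_id set_append)
    finally show ?thesis .
  qed
  have lenL': "length L' = ?d" by (rule LR(1))
  have setrs: "set rs = (\<lambda>t. rs ! t) ` {..<k}" using R(2) by (auto simp: set_conv_nth)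
  have L'in: "L' ! p \<in> set L" if "p < ?d" for p
  proof (cases "p \<in> set rs")
    case True
    then obtain t where t: "t < k" "p = rs ! t" using setrs by auto
    then have "L' ! p = J ! t" using LR(2) by simp
    also have "\<dots> \<in> A" using t Aeq by auto
    also have "A \<subseteq> set L" unfolding AB' B_def using R(3) by auto
    finally show ?thesis .
  next
    case False then show ?thesis using LR(3) that by simp
  qed
  show dL': "distinct L'"
    unfolding distinct_conv_nth lenL'
  proof (intro allI impI)
    fix p p' assume pp: "p < ?d" "p' < ?d" "p \<noteq> p'"
    show "L' ! p \<noteq> L' ! p'"
    proof (cases "p \<in> set rs"; cases "p' \<in> set rs")
      assume "p \<in> set rs" "p' \<in> set rs"
      then obtain s t where "s < k" "p = rs ! s" "t < k" "p' = rs ! t" using setrs by auto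
      then show ?thesis using LR(2) dJ kJ pp(3) by (auto simp: nth_eq_iff_index_eq)
    next
      assume a: "p \<in> set rs" "p' \<notin> set rs"
      then obtain s where s: "s < k" "p = rs ! s" using setrs by auto
      have "J ! s \<in> B" using s Aeq AB' by auto
      then obtain u where u: "u < k" "J ! s = L ! (rs ! u)" unfolding B_def by auto
      have "L ! (rs ! u) \<noteq> L ! p'"
        using dL R(3)[OF u(1)] pp(2) a(2) u(1) setrs by (auto simp: nth_eq_iff_index_eq)
      then show ?thesis using LR(2)[OF s(1)] LR(3)[OF a(2)] s u by simp
    next
      assume a: "p \<notin> set rs" "p' \<in> set rs"
      then obtain s where s: "s < k" "p' = rs ! s" using setrs by auto
      have "J ! s \<in> B" using s Aeq AB' by auto
      then obtain u where u: "u < k" "J ! s = L ! (rs ! u)" unfolding B_def by auto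
      have "L ! (rs ! u) \<noteq> L ! p"
        using dL R(3)[OF u(1)] pp(1) a(1) u(1) setrs by (auto simp: nth_eq_iff_index_eq)
      then show ?thesis using LR(2)[OF s(1)] LR(3)[OF a(1)] s u by simp
    next
      assume a: "p \<notin> set rs" "p' \<notin> set rs"
      then show ?thesis using LR(3) dL pp by (simp add: nth_eq_iff_index_eq)
    qed
  qed
  show sL': "set L' = set L"
  proof (rule card_subset_eq)
    show "finite (set L)" by simp
    show "set L' \<subseteq> set L" using L'in lenL' by (auto simp: set_conv_nth)
    show "card (set L') = card (set L)"
      using dL dL' lenL' by (simp add: distinct_card)
  qed
  have lenJ': "length J' = ?e" using kJ by (simp add: J'_def length_J_repl)
  have s1: "sgnl J * sgnl J' = (\<Prod>p\<in>pairs ?e \<inter> ({..<k} \<times> {..<k}). sig J (fst p) (snd p) * sig J' (fst p) (snd p))"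
    unfolding sgnl_def
  proof (rule block_sign)
    show "length J = ?e" "length J' = ?e" "distinct J" "distinct J'" using lenJ' dJ dJ' by auto
    show "{..<k} \<subseteq> {..<?e}" using kJ by auto
    show "\<And>q. q < ?e \<Longrightarrow> q \<notin> {..<k} \<Longrightarrow> J ! q = J' ! q"
      using kJ by (simp add: J'_def nth_J_repl2)
    show "(!) J ` {..<k} = (!) J' ` {..<k}"
      using Aeq AB' kJ unfolding B_def by (auto simp: J'_def nth_J_repl1)
  qed
  have pk: "pairs ?e \<inter> ({..<k} \<times> {..<k}) = pairs k" using kJ by (auto simp: pairs_def)
  have s2: "sgnl L * sgnl L' = (\<Prod>p\<in>pairs ?d \<inter> (set rs \<times> set rs). sig L (fst p) (snd p) * sig L' (fst p) (snd p))"
    unfolding sgnl_def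
  proof (rule block_sign)
    show "length L = ?d" "length L' = ?d" "distinct L" "distinct L'" using lenL' dL dL' by auto
    show "set rs \<subseteq> {..<?d}" using R(3) setrs by auto
    show "\<And>q. q < ?d \<Longrightarrow> q \<notin> set rs \<Longrightarrow> L ! q = L' ! q" using LR(3) by simp
    show "(!) L ` set rs = (!) L' ` set rs"
      unfolding setrs using Aeq AB' LR(2) unfolding B_def by (auto simp: image_image)
  qed
  define h where "h p = (rs ! fst p, rs ! snd p)" for p
  have hinj: "inj_on h (pairs k)"
    using R(1,2) by (auto simp: inj_on_def h_def pairs_def nth_eq_iff_index_eq)
  have himg: "pairs ?d \<inter> (set rs \<times> set rs) = h ` pairs k"
  proof
    show "h ` pairs k \<subseteq> pairs ?d \<inter> (set rs \<times> set rs)"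
      using R(2,3,4) by (auto simp: h_def pairs_def)
    show "pairs ?d \<inter> (set rs \<times> set rs) \<subseteq> h ` pairs k"
    proof
      fix p assume p: "p \<in> pairs ?d \<inter> (set rs \<times> set rs)"
      then obtain s t where st: "s < k" "t < k" "fst p = rs ! s" "snd p = rs ! t"
        using setrs by auto
      have "fst p < snd p" using p by (auto simp: pairs_def)
      then have "s < t" using st R(4)
        by (metis linorder_neqE_nat order_less_asym)
      then have "(s,t) \<in> pairs k" "p = h (s,t)" using st by (auto simp: pairs_def h_def prod_eq_iff)
      then show "p \<in> h ` pairs k" by blast
    qed
  qed
  have "sgnl L * sgnl L' = (\<Prod>p\<in>pairs k. sig L (rs ! fst p) (rs ! snd p) * sig L' (rs ! fst p) (rs ! snd p))"
    unfolding s2 himg by (subst prod.reindex[OF hinj]) (simp add: h_def)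
  also have "\<dots> = (\<Prod>p\<in>pairs k. sig J (fst p) (snd p) * sig J' (fst p) (snd p))"
  proof (rule prod.cong[OF refl])
    fix p assume "p \<in> pairs k"
    then have "fst p < k" "snd p < k" by (auto simp: pairs_def)
    then show "sig L (rs ! fst p) (rs ! snd p) * sig L' (rs ! fst p) (rs ! snd p) =
        sig J (fst p) (snd p) * sig J' (fst p) (snd p)"
      using kJ LR(2) by (simp add: sig_def J'_def nth_J_repl1)
  qed
  also have "\<dots> = sgnl J * sgnl J'" using s1 pk by simp
  finally have eq: "sgnl L * sgnl L' = sgnl J * sgnl J'" .
  have "sgnl J' * sgnl L' = (sgnl J' * sgnl L') * (sgnl L * sgnl L)" by (simp add: sgnl_sq)
  also have "\<dots> = sgnl J' * sgnl L * (sgnl L * sgnl L')" by (simp add: mult_ac)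
  also have "\<dots> = sgnl J' * sgnl L * (sgnl J * sgnl J')" by (simp add: eq)
  also have "\<dots> = (sgnl J' * sgnl J') * sgnl J * sgnl L" by (simp add: mult_ac)
  also have "\<dots> = sgnl J * sgnl L" by (simp add: sgnl_sq)
  finally show "sgnl J' * sgnl L' = sgnl J * sgnl L" .
qed

lemma derive_AB:
  assumes dJ: "distinct J" and dL: "distinct L" and kJ: "k \<le> length J"
    and rs: "rs \<in> RS k (length L)"
    and dJ': "distinct (J_repl k J L rs)" and dL': "distinct (L_repl k J L rs)"
    and sub: "set (J_repl k J L rs) \<subseteq> set (L_repl k J L rs)"
  shows "set (take k J) = (\<lambda>t. L ! (rs ! t)) ` {..<k}"
proof -
  let ?d = "length L"
  define J' where "J' = J_repl k J L rs"
  define L' where "L' = L_repl k J L rs"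
  note R = RS_facts[OF rs]
  note LR = L_repl_facts[OF rs, where J=J, folded L'_def]
  define A where "A = set (take k J)"
  define B where "B = (\<lambda>t. L ! (rs ! t)) ` {..<k}"
  have Aeq: "A = (\<lambda>t. J ! t) ` {..<k}" unfolding A_def using kJ
    by (auto simp: set_conv_nth) (metis nth_take)
  have setrs: "set rs = (\<lambda>t. rs ! t) ` {..<k}" using R(2) by (auto simp: set_conv_nth)
  have BJ': "B \<subseteq> set J'"
  proof
    fix a assume "a \<in> B"
    then obtain t where t: "t < k" "a = L ! (rs ! t)" by (auto simp: B_def)
    then have "a = J' ! t" using kJ by (simp add: J'_def nth_J_repl1)
    moreover have "t < length J'" using t kJ by (simp add: J'_def length_J_repl)
    ultimately show "a \<in> set J'" by simp
  qed
  have "set L \<subseteq> set L'"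
  proof
    fix a assume "a \<in> set L"
    then obtain p where p: "p < ?d" "a = L ! p" by (auto simp: set_conv_nth)
    show "a \<in> set L'"
    proof (cases "p \<in> set rs")
      case True
      then obtain t where "t < k" "p = rs ! t" using setrs by auto
      then have "a \<in> B" using p by (auto simp: B_def)
      then show ?thesis using BJ' sub J'_def L'_def by auto
    next
      case False
      then have "a = L' ! p" using LR(3) p by simp
      then show ?thesis using p LR(1) by simp
    qed
  qed
  then have LL': "set L = set L'"
    using dL dL' LR(1) L'_def by (metis card_subset_eq distinct_card finite_set)
  have AB: "A \<subseteq> B"
  proof
    fix a assume "a \<in> A"
    then obtain t where t: "t < k" "a = J ! t" using Aeq by auto
    have "a = L' ! (rs ! t)" using LR(2) t by simp
    then have "a \<in> set L" using LL' LR(1) R(3) t by (metis nth_mem)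
    then obtain p where p: "p < ?d" "a = L ! p" by (auto simp: set_conv_nth)
    show "a \<in> B"
    proof (cases "p \<in> set rs")
      case True
      then obtain u where "u < k" "p = rs ! u" using setrs by auto
      then show ?thesis using p by (auto simp: B_def)
    next
      case False
      then have "L' ! p = a" using LR(3) p by simp
      moreover have "p \<noteq> rs ! t" using False t R(2) by (metis nth_mem)
      ultimately have False using dL' L'_def LR(1) p(1) R(3)[OF t(1)] \<open>a = L' ! (rs ! t)\<close>
        by (metis nth_eq_iff_index_eq)
      then show ?thesis ..
    qed
  qed
  have cA: "card A = k" unfolding A_def using dJ kJ by (simp add: distinct_card)
  have cB: "card B = k"
  proof -
    have "inj_on (\<lambda>t. L ! (rs ! t)) {..<k}"
    proof (rule inj_onI)
      fix s t assume st: "s \<in> {..<k}" "t \<in> {..<k}" "L ! (rs ! s) = L ! (rs ! t)"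
      then have "rs ! s = rs ! t" using dL R(3) by (simp add: nth_eq_iff_index_eq)
      then show "s = t" using R(1,2) st by (simp add: nth_eq_iff_index_eq)
    qed
    then show ?thesis unfolding B_def by (simp add: card_image)
  qed
  have "A = B" using AB cA cB by (metis B_def card_subset_eq finite_imageI finite_lessThan)
  then show ?thesis by (simp add: A_def B_def)
qed

definition evl :: "(pvar \<Rightarrow> complex) \<Rightarrow> nat list \<Rightarrow> complex" where
  "evl y J = (if distinct J then sgnl J * y (set J) else 0)"

lemma peval_pseq: "peval y (pseq J) = evl y J"
  by (simp add: pseq_def evl_def peval_mult peval_neg1_power peval_PVar sgnl_def)

lemma finite_RS: "finite (RS k d)"
proof (rule finite_subset)
  show "RS k d \<subseteq> {xs. set xs \<subseteq> {..<d} \<and> length xs = k}" by (auto simp: RS_def)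
  show "finite {xs. set xs \<subseteq> {..<d} \<and> length xs = k}" by (rule finite_lists_length_eq) simp
qed

lemma pluecker_vanish:
  assumes nested: "\<And>I I'. y I \<noteq> 0 \<Longrightarrow> y I' \<noteq> 0 \<Longrightarrow> card I \<le> card I' \<Longrightarrow> I \<subseteq> I'"
    and dJ: "distinct J" and dL: "distinct L" and k1: "1 \<le> k" and kJ: "k \<le> length J"
    and JL: "length J \<le> length L"
  shows "peval y (pluecker_rel k J L) = 0"
proof -
  let ?d = "length L"
  let ?RS = "RS k ?d"
  define tm where "tm = (\<lambda>rs. evl y (J_repl k J L rs) * evl y (L_repl k J L rs))"
  define A where "A = set (take k J)"
  define rs0 where "rs0 = sorted_list_of_set {p. p < ?d \<and> L ! p \<in> A}"
  have RSeq: "{rs. sorted_wrt (<) rs \<and> length rs = k \<and> set rs \<subseteq> {..<?d}} = ?RS"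
    by (simp add: RS_def)
  have pe: "peval y (pluecker_rel k J L) = evl y J * evl y L - (\<Sum>rs\<in>?RS. tm rs)"
    unfolding pluecker_rel_def RSeq tm_def
    by (simp add: peval_diff peval_sum peval_mult peval_pseq)
  have T: "rs = rs0 \<and> tm rs = evl y J * evl y L" if rs: "rs \<in> ?RS" and nz: "tm rs \<noteq> 0" for rs
  proof -
    define J' where "J' = J_repl k J L rs"
    define L' where "L' = L_repl k J L rs"
    note R = RS_facts[OF rs]
    note LR = L_repl_facts[OF rs, where J=J, folded L'_def]
    have dJ': "distinct J'" and dL': "distinct L'" and yJ': "y (set J') \<noteq> 0" and yL': "y (set L') \<noteq> 0"
      using nz by (auto simp: tm_def evl_def J'_def L'_def split: if_splits)
    have "card (set J') = length J" using dJ' kJ by (simp add: distinct_card J'_def length_J_repl)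
    moreover have "card (set L') = ?d" using dL' LR(1) by (simp add: distinct_card)
    ultimately have sub: "set J' \<subseteq> set L'" using nested[OF yJ' yL'] JL by simp
    have AB: "set (take k J) = (\<lambda>t. L ! (rs ! t)) ` {..<k}"
      by (rule derive_AB[OF dJ dL kJ rs]) (use dJ' dL' sub in \<open>simp_all add: J'_def L'_def\<close>)
    note W = core_W[OF dJ dL kJ rs AB, folded J'_def L'_def]
    have "tm rs = sgnl J' * y (set J') * (sgnl L' * y (set L'))"
      using dJ' dL' by (simp add: tm_def evl_def J'_def L'_def)
    also have "\<dots> = (sgnl J' * sgnl L') * y (set J) * y (set L)" using W by (simp add: mult_ac)
    also have "\<dots> = evl y J * evl y L" using W dJ dL by (simp add: evl_def mult_ac)
    finally have t: "tm rs = evl y J * evl y L" .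
    have "set rs = {p. p < ?d \<and> L ! p \<in> A}"
    proof
      show "set rs \<subseteq> {p. p < ?d \<and> L ! p \<in> A}"
        using R AB by (auto simp: A_def set_conv_nth)
      show "{p. p < ?d \<and> L ! p \<in> A} \<subseteq> set rs"
      proof
        fix p assume "p \<in> {p. p < ?d \<and> L ! p \<in> A}"
        then have p: "p < ?d" "L ! p \<in> A" by auto
        then obtain t where "t < k" "L ! p = L ! (rs ! t)" using AB by (auto simp: A_def)
        then have "p = rs ! t" using dL p R(3) by (simp add: nth_eq_iff_index_eq)
        then show "p \<in> set rs" using \<open>t < k\<close> R(2) by simp
      qed
    qed
    then have "rs = rs0" unfolding rs0_def
      using rs by (intro strict_sorted_equal[symmetric]) (auto simp: RS_def strict_sorted_iff)
    with t show ?thesis by simp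
  qed
  have U: "rs0 \<in> ?RS \<and> tm rs0 = evl y J * evl y L" if nz: "evl y J * evl y L \<noteq> 0"
  proof -
    have yJ: "y (set J) \<noteq> 0" and yL: "y (set L) \<noteq> 0" using nz by (auto simp: evl_def split: if_splits)
    have "set J \<subseteq> set L" using nested[OF yJ yL] dJ dL JL by (simp add: distinct_card)
    then have AL: "A \<subseteq> set L" unfolding A_def by (meson set_take_subset subset_trans)
    let ?P = "{p. p < ?d \<and> L ! p \<in> A}"
    have finP: "finite ?P" by simp
    have imgP: "(\<lambda>p. L ! p) ` ?P = A" using AL by (auto simp: set_conv_nth)
    have injP: "inj_on (\<lambda>p. L ! p) ?P" using dL by (auto simp: inj_on_def nth_eq_iff_index_eq)
    have cA: "card A = k" unfolding A_def using dJ kJ by (simp add: distinct_card)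
    have len0: "length rs0 = k"
      unfolding rs0_def using card_image[OF injP] imgP cA by simp
    have rs0RS: "rs0 \<in> ?RS"
      unfolding RS_def using len0 by (auto simp: rs0_def strict_sorted_iff)
    have s0: "set rs0 = ?P" unfolding rs0_def by simp
    have AB: "set (take k J) = (\<lambda>t. L ! (rs0 ! t)) ` {..<k}"
    proof -
      have "(\<lambda>t. L ! (rs0 ! t)) ` {..<k} = (\<lambda>p. L ! p) ` set rs0"
        using len0 by (auto simp: set_conv_nth image_iff)
      also have "\<dots> = A" using s0 imgP by simp
      finally show ?thesis by (simp add: A_def)
    qed
    note W = core_W[OF dJ dL kJ rs0RS AB]
    have "tm rs0 = evl y J * evl y L"
      using W dJ dL by (simp add: tm_def evl_def mult_ac)
    with rs0RS show ?thesis by simp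
  qed
  have "(\<Sum>rs\<in>?RS. tm rs) = evl y J * evl y L"
  proof (cases "rs0 \<in> ?RS")
    case True
    have "(\<Sum>rs\<in>?RS. tm rs) = tm rs0 + (\<Sum>rs\<in>?RS - {rs0}. tm rs)"
      by (rule sum.remove[OF finite_RS True])
    also have "(\<Sum>rs\<in>?RS - {rs0}. tm rs) = 0"
      using T by (intro sum.neutral) blast
    also have "tm rs0 = evl y J * evl y L"
      using T[OF True] U by (cases "tm rs0 = 0") auto
    finally show ?thesis by simp
  next
    case False
    have "(\<Sum>rs\<in>?RS. tm rs) = 0" using T False by (intro sum.neutral) blast
    moreover have "evl y J * evl y L = 0" using U False by blast
    ultimately show ?thesis by simp
  qed
  then show ?thesis using pe by simp
qed



definition ytor :: "nat \<Rightarrow> pvar set \<Rightarrow> complex \<Rightarrow> pvar \<Rightarrow> complex" where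
  "ytor n Fam t I = (if I \<in> Fam then t ^ wt_var n I else 0)"

lemma mon_ytor:
  "mon (ytor n Fam t) m = (if Poly_Mapping.keys m \<subseteq> Fam then t ^ wt_mono n m else 0)"
proof (cases "Poly_Mapping.keys m \<subseteq> Fam")
  case True
  have "mon (ytor n Fam t) m = (\<Prod>I\<in>Poly_Mapping.keys m. t ^ (Poly_Mapping.lookup m I * wt_var n I))"
    unfolding mon_def using True by (intro prod.cong refl) (auto simp: ytor_def power_mult mult.commute)
  also have "\<dots> = t ^ wt_mono n m" by (simp add: wt_mono_def power_sum)
  finally show ?thesis using True by simp
next
  case False
  then obtain I where I: "I \<in> Poly_Mapping.keys m" "I \<notin> Fam" by blast
  then have "ytor n Fam t I ^ Poly_Mapping.lookup m I = 0"
    by (simp add: ytor_def in_keys_iff)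
  then have "mon (ytor n Fam t) m = 0" unfolding mon_def using I(1)
    by (intro prod_zero) auto
  then show ?thesis using False by simp
qed

lemma torus:
  assumes van: "\<And>t g. g \<in> G \<Longrightarrow> peval (ytor n Fam t) g = 0"
    and f: "f \<in> ideal_gen n G"
  shows "peval (ytor n Fam 1) (in_w n f) = 0"
proof -
  define K where "K = {m \<in> Poly_Mapping.keys f. Poly_Mapping.keys m \<subseteq> Fam}"
  define p where "p = (\<Sum>m\<in>K. monom (Poly_Mapping.lookup f m) (wt_mono n m))"
  have "poly p t = 0" for t
  proof -
    have "poly p t = (\<Sum>m\<in>K. Poly_Mapping.lookup f m * t ^ wt_mono n m)"
      by (simp add: p_def poly_sum poly_monom)
    also have "\<dots> = (\<Sum>m\<in>Poly_Mapping.keys f. Poly_Mapping.lookup f m * mon (ytor n Fam t) m)"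
      unfolding K_def mon_ytor by (simp add: sum.inter_filter if_distrib cong: if_cong)
    also have "\<dots> = peval (ytor n Fam t) f" by (simp add: peval_mon)
    also have "\<dots> = 0" by (rule ideal_gen_peval[OF f van])
    finally show ?thesis .
  qed
  then have p0: "p = 0" using poly_all_0_iff_0 by blast
  define mw where "mw = Min (wt_mono n ` Poly_Mapping.keys f)"
  have "peval (ytor n Fam 1) (in_w n f) =
      (\<Sum>m\<in>{m\<in>Poly_Mapping.keys f. wt_mono n m = mw}. Poly_Mapping.lookup f m * mon (ytor n Fam 1) m)"
    unfolding in_w_restr mw_def[symmetric] peval_mon keys_restr
    by (intro sum.cong refl) (simp add: lookup_restr)
  also have "\<dots> = (\<Sum>m\<in>{m\<in>Poly_Mapping.keys f. wt_mono n m = mw}.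
      if Poly_Mapping.keys m \<subseteq> Fam then Poly_Mapping.lookup f m else 0)"
    by (intro sum.cong refl) (simp add: mon_ytor)
  also have "\<dots> = (\<Sum>m\<in>K. if wt_mono n m = mw then Poly_Mapping.lookup f m else 0)"
    unfolding K_def by (simp add: sum.inter_filter) (intro sum.cong; auto)
  also have "\<dots> = coeff p mw"
    by (simp add: p_def coeff_sum eq_commute)
  also have "\<dots> = 0" by (simp add: p0)
  finally show ?thesis .
qed



lemma w_apply:
  assumes "w \<circ> simple_refl i = w0 n"
  shows "w x = w0 n (simple_refl i x)"
proof -
  have "w x = w (simple_refl i (simple_refl i x))" by (simp add: simple_refl_def)
  also have "\<dots> = w0 n (simple_refl i x)" using assms by (metis comp_apply)
  finally show ?thesis .
qed

lemma w_image:
  assumes "w \<circ> simple_refl i = w0 n"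
  shows "w ` A = w0 n ` (simple_refl i ` A)"
  using w_apply[OF assms] by (auto simp: image_iff)

lemma s_image_ne: "1 \<le> i \<Longrightarrow> k \<noteq> i \<Longrightarrow> simple_refl i ` {1..k} = {1..k}"
  unfolding simple_refl_def by (rule transpose_image_eq) auto

lemma s_image_eq: "1 \<le> i \<Longrightarrow> simple_refl i ` {1..i} = {1..i-1} \<union> {i+1}"
  unfolding simple_refl_def by (auto simp: in_transpose_image_iff transpose_def)

lemma w0_image: "k \<le> n \<Longrightarrow> w0 n ` {1..k} = {n+1-k..n}"
proof -
  assume k: "k \<le> n"
  have "w0 n ` {1..k} = (\<lambda>j. n + 1 - j) ` {1..k}"
    using k by (intro image_cong refl) (auto simp: w0_def)
  also have "\<dots> = {n+1-k..n}"
  proof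
    show "(\<lambda>j. n + 1 - j) ` {1..k} \<subseteq> {n+1-k..n}" by auto
    show "{n+1-k..n} \<subseteq> (\<lambda>j. n + 1 - j) ` {1..k}"
    proof
      fix x assume "x \<in> {n+1-k..n}"
      then have "n + 1 - x \<in> {1..k}" "x = n + 1 - (n + 1 - x)" using k by auto
      then show "x \<in> (\<lambda>j. n + 1 - j) ` {1..k}" by blast
    qed
  qed
  finally show ?thesis .
qed

lemma w0_image_i: "1 \<le> i \<Longrightarrow> i < n \<Longrightarrow> w0 n ` ({1..i-1} \<union> {i+1}) = {n-i} \<union> {n-i+2..n}"
proof -
  assume i: "1 \<le> i" "i < n"
  have "w0 n ` ({1..i-1} \<union> {i+1}) = (\<lambda>j. n + 1 - j) ` ({1..i-1} \<union> {i+1})"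
    using i by (intro image_cong refl) (auto simp: w0_def)
  also have "\<dots> = {n-i} \<union> {n-i+2..n}"
  proof
    show "(\<lambda>j. n + 1 - j) ` ({1..i-1} \<union> {i+1}) \<subseteq> {n-i} \<union> {n-i+2..n}" using i by auto
    show "{n-i} \<union> {n-i+2..n} \<subseteq> (\<lambda>j. n + 1 - j) ` ({1..i-1} \<union> {i+1})"
    proof
      fix x assume x: "x \<in> {n-i} \<union> {n-i+2..n}"
      then have "n + 1 - x \<in> {1..i-1} \<union> {i+1}" "x = n + 1 - (n + 1 - x)" using i by auto
      then show "x \<in> (\<lambda>j. n + 1 - j) ` ({1..i-1} \<union> {i+1})" by blast
    qed
  qed
  finally show ?thesis .
qed

lemma strict_inc:
  assumes "sorted_wrt (<) (s::nat list)" "r \<le> j" "j < length s"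
  shows "s ! r + (j - r) \<le> s ! j"
  using assms(2,3)
proof (induction j)
  case 0 then show ?case by simp
next
  case (Suc j)
  show ?case
  proof (cases "r = Suc j")
    case True then show ?thesis by simp
  next
    case False
    then have "r \<le> j" using Suc.prems by simp
    then have "s ! r + (j - r) \<le> s ! j" using Suc by simp
    moreover have "s ! j < s ! Suc j" using assms(1) Suc.prems by (simp add: sorted_wrt_nth_less)
    ultimately show ?thesis using \<open>r \<le> j\<close> by simp
  qed
qed

lemma sorted_nth_bound:
  assumes "finite I" "I \<subseteq> {1..n}" "r < card I"
  shows "sorted_list_of_set I ! r + card I \<le> n + 1 + r"
proof -
  define s where "s = sorted_list_of_set I"
  have len: "length s = card I" by (simp add: s_def)
  have ss: "sorted_wrt (<) s" by (simp add: s_def strict_sorted_iff)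
  have "s ! r + (card I - 1 - r) \<le> s ! (card I - 1)"
    using strict_inc[OF ss, of r "card I - 1"] assms(3) len by simp
  moreover have "s ! (card I - 1) \<in> I"
    using len assms(3) by (metis s_def diff_less less_nat_zero_code nat_neq_iff nth_mem
        set_sorted_list_of_set assms(1) zero_less_one)
  then have "s ! (card I - 1) \<le> n" using assms(2) by auto
  ultimately show ?thesis using assms(3) unfolding s_def by simp
qed

lemma sorted_top: "sorted_list_of_set {a..b} = [a..<Suc b]"
  by (metis atLeastLessThanSuc_atLeastAtMost sorted_list_of_set_range)

lemma sorted_top_nth: "a + r \<le> b \<Longrightarrow> sorted_list_of_set {a..b} ! r = a + r"
  unfolding sorted_top by (subst nth_upt) auto

lemma gale_top:
  assumes "I \<subseteq> {1..n}" "card I = k" "k \<le> n"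
  shows "gale_le I {n+1-k..n}"
proof -
  have fin: "finite I" using assms(1) finite_subset by blast
  show ?thesis unfolding gale_le_def
  proof (intro conjI allI impI)
    show "card I = card {n+1-k..n}" using assms by simp
  next
    fix r assume r: "r < card I"
    have "sorted_list_of_set {n+1-k..n} ! r = n + 1 - k + r"
      using r assms by (intro sorted_top_nth) simp
    then show "sorted_list_of_set I ! r \<le> sorted_list_of_set {n+1-k..n} ! r"
      using sorted_nth_bound[OF fin assms(1) r] assms by simp
  qed
qed

lemma sorted_Ki: "1 \<le> (i::nat) \<Longrightarrow> i < n \<Longrightarrow> sorted_list_of_set ({n-i} \<union> {n-i+2..n}) = (n-i) # [n-i+2..<Suc n]"
proof -
  assume i: "1 \<le> i" "i < n"
  let ?K = "{n-i} \<union> {n-i+2..n}"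
  have "Min ?K = n - i" by (rule Min_eqI) auto
  moreover have "?K - {n-i} = {n-i+2..n}" by auto
  ultimately show ?thesis
    using sorted_list_of_set_nonempty[of ?K] by (simp add: sorted_top)
qed

lemma sorted_Ki_0: assumes "1 \<le> (i::nat)" "i < n"
  shows "sorted_list_of_set ({n-i} \<union> {n-i+2..n}) ! 0 = n - i"
  unfolding sorted_Ki[OF assms] by (rule nth_Cons_0)

lemma sorted_Ki_Suc: assumes "1 \<le> (i::nat)" "i < n" "r' + 1 < i"
  shows "sorted_list_of_set ({n-i} \<union> {n-i+2..n}) ! Suc r' = n - i + 2 + r'"
  unfolding sorted_Ki[OF assms(1,2)] nth_Cons_Suc using assms by (subst nth_upt) auto

lemma gale_i:
  assumes I: "I \<subseteq> {1..n}" "card I = i" and i: "1 \<le> i" "i < n" and ne: "I \<noteq> {n-i+1..n}"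
  shows "gale_le I ({n-i} \<union> {n-i+2..n})"
proof -
  have fin: "finite I" using assms(1) finite_subset by blast
  let ?K = "{n-i} \<union> {n-i+2..n}"
  have cK: "card ?K = i" using i by (subst card_Un_disjoint) auto
  have Ine: "I \<noteq> {}" using I i by auto
  show ?thesis unfolding gale_le_def
  proof (intro conjI allI impI)
    show "card I = card ?K" using cK I by simp
  next
    fix r assume r: "r < card I"
    show "sorted_list_of_set I ! r \<le> sorted_list_of_set ?K ! r"
    proof (cases r)
      case 0
      have "sorted_list_of_set I ! 0 = Min I"
        using sorted_list_of_set_nonempty[OF fin Ine] by simp
      moreover have "Min I \<le> n - i"
      proof (rule ccontr)
        assume "\<not> Min I \<le> n - i"
        have "I \<subseteq> {n-i+1..n}"
        proof
          fix x assume "x \<in> I"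
          then have "Min I \<le> x" "x \<le> n" using fin I(1) by auto
          then show "x \<in> {n-i+1..n}" using \<open>\<not> Min I \<le> n - i\<close> by simp
        qed
        then have "I = {n-i+1..n}" using I i by (intro card_subset_eq) auto
        then show False using ne by simp
      qed
      moreover have "sorted_list_of_set ?K ! 0 = n - i" by (rule sorted_Ki_0[OF i])
      ultimately show ?thesis using 0 by simp
    next
      case (Suc r')
      have "sorted_list_of_set ?K ! r = n - i + 2 + r'" unfolding Suc
        by (rule sorted_Ki_Suc[OF i]) (use Suc r I in simp)
      then show ?thesis using sorted_nth_bound[OF fin I(1) r] I Suc i by simp
    qed
  qed
qed

lemma not_gale_M:
  assumes i: "1 \<le> i" "i < n"
  shows "\<not> gale_le {n-i+1..n} ({n-i} \<union> {n-i+2..n})"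
proof -
  have "sorted_list_of_set {n-i+1..n} ! 0 = n - i + 1" using i by (subst sorted_top_nth) auto
  moreover have "sorted_list_of_set ({n-i} \<union> {n-i+2..n}) ! 0 = n - i" by (rule sorted_Ki_0[OF i])
  moreover have "0 < card {n-i+1..n}" using i by simp
  ultimately show ?thesis unfolding gale_le_def by auto
qed

lemma gale_w:
  assumes w: "w \<circ> simple_refl i = w0 n" and i: "1 \<le> i" "i < n"
    and I: "valid_var n I" and ne: "card I = i \<Longrightarrow> I \<noteq> {n-i+1..n}"
  shows "gale_le I (w ` {1..card I})"
proof -
  have Is: "I \<subseteq> {1..n}" "card I \<le> n" using I by (auto simp: valid_var_def)
  show ?thesis
  proof (cases "card I = i")
    case True
    have "w ` {1..card I} = w0 n ` ({1..i-1} \<union> {i+1})"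
      unfolding True w_image[OF w] s_image_eq[OF i(1)] ..
    also have "\<dots> = {n-i} \<union> {n-i+2..n}" by (rule w0_image_i[OF i])
    finally have "w ` {1..card I} = {n-i} \<union> {n-i+2..n}" .
    then show ?thesis using gale_i[OF Is(1) True i ne[OF True]] by simp
  next
    case False
    have "w ` {1..card I} = w0 n ` {1..card I}"
      unfolding w_image[OF w] s_image_ne[OF i(1) False] ..
    also have "\<dots> = {n+1-card I..n}" by (rule w0_image[OF Is(2)])
    finally have "w ` {1..card I} = {n+1-card I..n}" .
    then show ?thesis using gale_top[OF Is(1) refl Is(2)] by simp
  qed
qed

lemma not_gale_w:
  assumes w: "w \<circ> simple_refl i = w0 n" and i: "1 \<le> i" "i < n"
  shows "\<not> gale_le {n-i+1..n} (w ` {1..card {n-i+1..n}})"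
proof -
  have c: "card {n-i+1..n} = i" using i by simp
  have "w ` {1..i} = w0 n ` ({1..i-1} \<union> {i+1})"
    unfolding w_image[OF w] s_image_eq[OF i(1)] ..
  also have "\<dots> = {n-i} \<union> {n-i+2..n}" by (rule w0_image_i[OF i])
  finally have "w ` {1..i} = {n-i} \<union> {n-i+2..n}" .
  then show ?thesis using not_gale_M[OF i] c by simp
qed



definition Fam :: "nat list \<Rightarrow> nat \<Rightarrow> nat set set" where
  "Fam \<sigma> n = {set (take k \<sigma>) | k. 1 \<le> k \<and> k \<le> n - 1}"

locale perm_list =
  fixes \<sigma> :: "nat list" and n :: nat
  assumes dist: "distinct \<sigma>" and setl: "set \<sigma> = {1..n}"
begin

lemma len: "length \<sigma> = n"
  using dist setl by (metis card_atLeastAtMost diff_Suc_1 distinct_card)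

lemma card_take: "k \<le> n \<Longrightarrow> card (set (take k \<sigma>)) = k"
  using dist len by (simp add: distinct_card)

lemma Fam_card: "I \<in> Fam \<sigma> n \<Longrightarrow> \<exists>k. I = set (take k \<sigma>) \<and> card I = k \<and> 1 \<le> k \<and> k \<le> n - 1"
  unfolding Fam_def using card_take by fastforce

lemma nested: "I \<in> Fam \<sigma> n \<Longrightarrow> I' \<in> Fam \<sigma> n \<Longrightarrow> card I \<le> card I' \<Longrightarrow> I \<subseteq> I'"
  using Fam_card by (metis set_take_subset_set_take)

lemma Fam_valid: "I \<in> Fam \<sigma> n \<Longrightarrow> valid_var n I"
proof -
  assume "I \<in> Fam \<sigma> n"
  then obtain k where k: "I = set (take k \<sigma>)" "card I = k" "1 \<le> k" "k \<le> n - 1"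
    using Fam_card by blast
  have "I \<subseteq> {1..n}" using k(1) setl by (metis set_take_subset)
  then show ?thesis using k by (simp add: valid_var_def)
qed

lemma Fam_unique: "I \<in> Fam \<sigma> n \<Longrightarrow> card I = k \<Longrightarrow> I = set (take k \<sigma>)"
  using Fam_card by blast

lemma ytor_cone: "ytor n (Fam \<sigma> n) 1 \<in> cone n"
  unfolding cone_def
proof (intro CollectI conjI allI impI ballI)
  fix I assume "\<not> valid_var n I"
  then show "ytor n (Fam \<sigma> n) 1 I = 0" using Fam_valid by (auto simp: ytor_def)
next
  fix k assume k: "k \<in> {1..n-1}"
  have "set (take k \<sigma>) \<in> Fam \<sigma> n" using k unfolding Fam_def by auto
  moreover have "card (set (take k \<sigma>)) = k" using k by (intro card_take) auto
  ultimately show "\<exists>I. valid_var n I \<and> card I = k \<and> ytor n (Fam \<sigma> n) 1 I \<noteq> 0"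
    using Fam_valid by (auto simp: ytor_def)
qed

lemma witness:
  assumes w: "w \<circ> simple_refl i = w0 n" and i: "1 \<le> i" "i < n"
    and notM: "set (take i \<sigma>) \<noteq> {n-i+1..n}"
  shows "ytor n (Fam \<sigma> n) 1 \<in> degenerate_schubert n w"
  unfolding degenerate_schubert_def zero_set_def
proof (intro CollectI conjI ballI ytor_cone)
  fix h assume h: "h \<in> in_ideal n (I_schubert n w)"
  let ?G = "pluecker_rels n \<union> {PVar I | I. valid_var n I \<and> \<not> gale_le I (w ` {1..card I})}"
  have van: "peval (ytor n (Fam \<sigma> n) t) g = 0" if g: "g \<in> ?G" for t g
  proof (cases "g \<in> pluecker_rels n")
    case True
    then obtain k J L where g: "g = pluecker_rel k J L" and c: "distinct J" "distinct L"
      "1 \<le> length J" "length J \<le> length L" "k \<in> {1..length J}"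
      unfolding pluecker_rels_def by blast
    show ?thesis unfolding g
    proof (rule pluecker_vanish)
      fix I I' assume "ytor n (Fam \<sigma> n) t I \<noteq> 0" "ytor n (Fam \<sigma> n) t I' \<noteq> 0" "card I \<le> card I'"
      then show "I \<subseteq> I'" using nested by (auto simp: ytor_def split: if_splits)
    qed (use c in auto)
  next
    case False
    then obtain I where gI: "g = PVar I" and vI: "valid_var n I" and ng: "\<not> gale_le I (w ` {1..card I})"
      using g by blast
    have "I \<notin> Fam \<sigma> n"
    proof
      assume IF: "I \<in> Fam \<sigma> n"
      have "card I = i \<Longrightarrow> I \<noteq> {n-i+1..n}" using Fam_unique[OF IF] notM by blast
      then have "gale_le I (w ` {1..card I})" using gale_w[OF w i vI] by blast
      then show False using ng by simp
    qed
    then show ?thesis by (simp add: gI peval_PVar ytor_def)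
  qed
  show "peval (ytor n (Fam \<sigma> n) 1) h = 0"
    using h unfolding in_ideal_def
  proof (rule ideal_gen_peval)
    fix g assume "g \<in> in_w n ` I_schubert n w"
    then obtain f where f: "f \<in> I_schubert n w" "g = in_w n f" by blast
    show "peval (ytor n (Fam \<sigma> n) 1) g = 0"
      unfolding f(2) by (rule torus[where G="?G", OF van]) (use f(1) in \<open>simp_all add: I_schubert_def\<close>)
  qed
qed

end



lemma neg1_pow_ppoly: "((-1)::ppoly) ^ k = Poly_Mapping.single 0 ((-1) ^ k)"
  by (induction k) (simp_all add: single_uminus mult_single)

lemma pseq_single: "distinct X \<Longrightarrow> pseq X = Poly_Mapping.single (Poly_Mapping.single (set X) 1) (sgnl X)"
  by (simp add: pseq_def PVar_def neg1_pow_ppoly mult_single sgnl_def)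

lemma pseq_mult: "distinct X \<Longrightarrow> distinct Y \<Longrightarrow> pseq X * pseq Y =
   Poly_Mapping.single (Poly_Mapping.single (set X) 1 + Poly_Mapping.single (set Y) 1) (sgnl X * sgnl Y)"
  by (simp add: pseq_single mult_single)

lemma sgnl_nz: "sgnl X \<noteq> 0" by (simp add: sgnl_def)

definition okm :: "nat \<Rightarrow> nat \<Rightarrow> nat \<Rightarrow> pmono \<Rightarrow> bool" where
  "okm n e d m \<longleftrightarrow> (\<exists>A B. m = Poly_Mapping.single A 1 + Poly_Mapping.single B 1 \<and>
     A \<subseteq> {1..n} \<and> B \<subseteq> {1..n} \<and> card A = e \<and> card B = d)"

lemma block_deg_single[simp]: "block_deg k (Poly_Mapping.single A c) = (if card A = k then c else 0)"
proof -
  have "{I \<in> Poly_Mapping.keys (Poly_Mapping.single A c). card I = k} = (if card A = k \<and> c \<noteq> 0 then {A} else {})"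
    by auto
  then show ?thesis unfolding block_deg_def by auto
qed

lemma okm_block_deg: "okm n e d m \<Longrightarrow> block_deg k m = (if e = k then 1 else 0) + (if d = k then 1 else 0)"
  by (auto simp: okm_def block_deg_add)

lemma okm_good: "okm n e d m \<Longrightarrow> 1 \<le> e \<Longrightarrow> e \<le> n - 1 \<Longrightarrow> 1 \<le> d \<Longrightarrow> d \<le> n - 1 \<Longrightarrow> good n m"
proof -
  assume "okm n e d m" and ed: "1 \<le> e" "e \<le> n - 1" "1 \<le> d" "d \<le> n - 1"
  then obtain A B where AB: "m = Poly_Mapping.single A 1 + Poly_Mapping.single B 1"
     "A \<subseteq> {1..n}" "B \<subseteq> {1..n}" "card A = e" "card B = d" unfolding okm_def by blast
  have "Poly_Mapping.keys m = {A, B}" using AB(1) by (auto simp: keys_add_nat)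
  then show ?thesis unfolding good_def valid_var_def using AB ed by auto
qed

lemma keys_pseq_mult:
  assumes "set X \<subseteq> {1..n}" "set Y \<subseteq> {1..n}" "length X = e" "length Y = d"
  shows "\<forall>m\<in>Poly_Mapping.keys (pseq X * pseq Y). okm n e d m"
proof (cases "distinct X \<and> distinct Y")
  case True
  then have "Poly_Mapping.keys (pseq X * pseq Y) = {Poly_Mapping.single (set X) 1 + Poly_Mapping.single (set Y) 1}"
    by (simp add: pseq_mult sgnl_nz)
  moreover have "okm n e d (Poly_Mapping.single (set X) 1 + Poly_Mapping.single (set Y) 1)"
    unfolding okm_def using assms True by (intro exI[of _ "set X"] exI[of _ "set Y"]) (simp add: distinct_card)
  ultimately show ?thesis by simp
next
  case False
  then have "pseq X * pseq Y = 0" by (auto simp: pseq_def)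
  then show ?thesis by simp
qed

lemma multihom_of_okm:
  assumes "\<forall>m\<in>Poly_Mapping.keys f. okm n e d m" "1 \<le> e" "e \<le> n - 1" "1 \<le> d" "d \<le> n - 1"
  shows "multihom n f"
  unfolding multihom_def A_ring_iff
proof (intro conjI ballI allI)
  fix m assume "m \<in> Poly_Mapping.keys f"
  then show "good n m" using assms okm_good by blast
next
  fix m1 m2 k assume "m1 \<in> Poly_Mapping.keys f" "m2 \<in> Poly_Mapping.keys f"
  then show "block_deg k m1 = block_deg k m2" using assms(1) okm_block_deg by metis
qed

lemma keys_diff_sub: "Poly_Mapping.keys (f - g :: ppoly) \<subseteq> Poly_Mapping.keys f \<union> Poly_Mapping.keys g"
  by (auto simp: in_keys_iff lookup_minus)

lemma keys_sum_sub: "Poly_Mapping.keys (\<Sum>x\<in>S. F x :: ppoly) \<subseteq> (\<Union>x\<in>S. Poly_Mapping.keys (F x))"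
proof (induction S rule: infinite_finite_induct)
  case (insert x F)
  then show ?case using keys_add by fastforce
qed auto

lemma multihom_pluecker:
  assumes "g \<in> pluecker_rels n"
  shows "multihom n g"
proof -
  obtain k J L where g: "g = pluecker_rel k J L" and c: "distinct J" "distinct L"
      "set J \<subseteq> {1..n}" "set L \<subseteq> {1..n}" "1 \<le> length J" "length J \<le> length L" "length L \<le> n - 1"
      "k \<in> {1..length J}"
    using assms unfolding pluecker_rels_def by blast
  let ?e = "length J" and ?d = "length L"
  have t1: "\<forall>m\<in>Poly_Mapping.keys (pseq J * pseq L). okm n ?e ?d m"
    using c by (intro keys_pseq_mult) auto
  have t2: "\<forall>m\<in>Poly_Mapping.keys (pseq (J_repl k J L rs) * pseq (L_repl k J L rs)). okm n ?e ?d m"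
    if rs: "rs \<in> RS k ?d" for rs
  proof (rule keys_pseq_mult)
    note LR = L_repl_facts[OF rs, where J=J]
    note R = RS_facts[OF rs]
    show "length (J_repl k J L rs) = ?e" using c by (simp add: length_J_repl)
    show "length (L_repl k J L rs) = ?d" using LR by simp
    show "set (J_repl k J L rs) \<subseteq> {1..n}"
    proof -
      have "set (J_repl k J L rs) \<subseteq> set L \<union> set J"
        unfolding J_repl_def using R(3) by (auto dest: in_set_dropD)
      then show ?thesis using c by auto
    qed
    show "set (L_repl k J L rs) \<subseteq> {1..n}"
    proof
      fix a assume "a \<in> set (L_repl k J L rs)"
      then obtain p where p: "p < ?d" "a = L_repl k J L rs ! p" using LR(1) by (auto simp: set_conv_nth)
      show "a \<in> {1..n}"
      proof (cases "p \<in> set rs")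
        case True
        then obtain t where "t < k" "p = rs ! t" using R(2) by (auto simp: set_conv_nth)
        then have "a = J ! t" using LR(2) p by simp
        moreover have "J ! t \<in> set J" using \<open>t < k\<close> c(8) by simp
        ultimately show ?thesis using c(3) by blast
      next
        case False
        then have "a = L ! p" using LR(3) p by simp
        then show ?thesis using p c(4) by (metis nth_mem subsetD)
      qed
    qed
  qed
  have "Poly_Mapping.keys g \<subseteq> Poly_Mapping.keys (pseq J * pseq L) \<union>
      (\<Union>rs\<in>RS k ?d. Poly_Mapping.keys (pseq (J_repl k J L rs) * pseq (L_repl k J L rs)))"
  proof -
    have e: "{rs. sorted_wrt (<) rs \<and> length rs = k \<and> set rs \<subseteq> {..<?d}} = RS k ?d"
      by (simp add: RS_def)
    show ?thesis unfolding g pluecker_rel_def e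
      by (rule order.trans[OF keys_diff_sub Un_mono[OF order.refl keys_sum_sub]])
  qed
  then have "\<forall>m\<in>Poly_Mapping.keys g. okm n ?e ?d m" using t1 t2 by blast
  then show ?thesis by (rule multihom_of_okm) (use c in auto)
qed

lemma multihom_PVar: "valid_var n I \<Longrightarrow> multihom n (PVar I)"
  unfolding multihom_def using A_ring_PVar[of n I] by (simp add: PVar_def)

lemma multihom_gens:
  "g \<in> pluecker_rels n \<union> {PVar I | I. valid_var n I \<and> \<not> gale_le I (w ` {1..card I})} \<Longrightarrow> multihom n g"
  using multihom_pluecker multihom_PVar by blast



lemma RS_one: "RS 1 d = (\<lambda>r. [r]) ` {..<d}"
proof
  show "RS 1 d \<subseteq> (\<lambda>r. [r]) ` {..<d}"
  proof
    fix rs assume "rs \<in> RS 1 d"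
    then have "length rs = 1" "set rs \<subseteq> {..<d}" by (auto simp: RS_def)
    then obtain r where "rs = [r]" by (metis One_nat_def length_0_conv length_Suc_conv)
    then show "rs \<in> (\<lambda>r. [r]) ` {..<d}" using \<open>set rs \<subseteq> {..<d}\<close> by auto
  qed
  show "(\<lambda>r. [r]) ` {..<d} \<subseteq> RS 1 d" by (auto simp: RS_def)
qed

lemma three_term:
  assumes d: "distinct (a # b # c # S)"
  shows "pluecker_rel 1 (a # S) (b # c # S) =
    pseq (a # S) * pseq (b # c # S) - pseq (b # S) * pseq (a # c # S) - pseq (c # S) * pseq (b # a # S)"
proof -
  let ?J = "a # S" and ?L = "b # c # S"
  define g where "g r = pseq (J_repl 1 ?J ?L [r]) * pseq (L_repl 1 ?J ?L [r])" for r
  have e: "{rs. sorted_wrt (<) rs \<and> length rs = 1 \<and> set rs \<subseteq> {..<length ?L}} = (\<lambda>r. [r]) ` {..<length ?L}"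
    using RS_one[of "length ?L"] by (simp add: RS_def)
  have Jr: "J_repl 1 ?J ?L [r] = (?L ! r) # S" for r by (simp add: J_repl_def)
  have Lr: "L_repl 1 ?J ?L [r] = ?L[r := a]" for r by (simp add: L_repl_def)
  have "(\<Sum>rs\<in>{rs. sorted_wrt (<) rs \<and> length rs = 1 \<and> set rs \<subseteq> {..<length ?L}}.
      pseq (J_repl 1 ?J ?L rs) * pseq (L_repl 1 ?J ?L rs)) = (\<Sum>r<length ?L. g r)"
    unfolding e g_def by (subst sum.reindex) (auto simp: inj_on_def)
  also have "\<dots> = g 0 + (g 1 + (\<Sum>r<length S. g (Suc (Suc r))))"
    by (simp only: length_Cons sum.lessThan_Suc_shift One_nat_def)
  also have "(\<Sum>r<length S. g (Suc (Suc r))) = 0"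
  proof (rule sum.neutral, rule ballI)
    fix r assume "r \<in> {..<length S}"
    then have "\<not> distinct ((S ! r) # S)" by simp
    then show "g (Suc (Suc r)) = 0" unfolding g_def Jr by (auto simp: pseq_def)
  qed
  also have "g 0 = pseq (b # S) * pseq (a # c # S)" unfolding g_def Jr Lr by simp
  also have "g 1 = pseq (c # S) * pseq (b # a # S)" unfolding g_def Jr Lr by simp
  finally show ?thesis unfolding pluecker_rel_def by (simp add: algebra_simps)
qed

definition mono2 :: "pvar \<Rightarrow> pvar \<Rightarrow> pmono" where
  "mono2 A B = Poly_Mapping.single A 1 + Poly_Mapping.single B 1"

lemma pseq_mult2: "distinct X \<Longrightarrow> distinct Y \<Longrightarrow> pseq X * pseq Y =
   Poly_Mapping.single (mono2 (set X) (set Y)) (sgnl X * sgnl Y)"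
  by (simp add: pseq_mult mono2_def)

lemma mono2_ne: "A \<noteq> C \<Longrightarrow> A \<noteq> D \<Longrightarrow> mono2 A B \<noteq> mono2 C D"
proof
  assume ne: "A \<noteq> C" "A \<noteq> D" and eq: "mono2 A B = mono2 C D"
  have "Poly_Mapping.lookup (mono2 A B) A \<noteq> 0" by (simp add: mono2_def lookup_add)
  moreover have "Poly_Mapping.lookup (mono2 C D) A = 0" using ne by (simp add: mono2_def lookup_add lookup_single)
  ultimately show False using eq by simp
qed

lemma mon_mono2: "P \<noteq> Q \<Longrightarrow> mon x (mono2 P Q) = x P * x Q"
proof -
  assume ne: "P \<noteq> Q"
  have k: "Poly_Mapping.keys (mono2 P Q) = {P, Q}" by (auto simp: mono2_def keys_add_nat)
  show ?thesis unfolding mon_def k using ne by (simp add: mono2_def lookup_add lookup_single)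
qed

lemma wt_mono2: "P \<noteq> Q \<Longrightarrow> wt_mono n (mono2 P Q) = wt_var n P + wt_var n Q"
proof -
  assume ne: "P \<noteq> Q"
  have k: "Poly_Mapping.keys (mono2 P Q) = {P, Q}" by (auto simp: mono2_def keys_add_nat)
  show ?thesis unfolding wt_mono_def k using ne by (simp add: mono2_def lookup_add lookup_single)
qed

lemma in_w_two:
  assumes ne: "mA \<noteq> mB" and u: "uA \<noteq> 0" "uB \<noteq> 0" and lt: "wt_mono n mA < wt_mono n mB"
  shows "in_w n (Poly_Mapping.single mA uA + Poly_Mapping.single mB uB) = Poly_Mapping.single mA uA"
proof -
  let ?f = "Poly_Mapping.single mA uA + Poly_Mapping.single mB uB"
  have lk: "Poly_Mapping.lookup ?f m = (if m = mA then uA else if m = mB then uB else 0)" for m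
    using ne by (simp add: lookup_add lookup_single when_def)
  have k: "Poly_Mapping.keys ?f = {mA, mB}" using u by (auto simp: in_keys_iff lk split: if_splits)
  have mn: "Min (wt_mono n ` Poly_Mapping.keys ?f) = wt_mono n mA" unfolding k using lt by simp
  show ?thesis unfolding in_w_restr mn
    by (rule poly_mapping_eqI) (use lt in \<open>auto simp: lookup_restr lk lookup_single when_def\<close>)
qed

lemma key_vanish:
  assumes f: "f \<in> I_schubert n w"
    and feq: "f = Poly_Mapping.single mA uA + Poly_Mapping.single mB uB + Poly_Mapping.single mC uC"
    and ne: "mA \<noteq> mB" and u: "uA \<noteq> 0" "uB \<noteq> 0"
    and C: "Poly_Mapping.single mC uC \<in> I_schubert n w"
    and lt: "wt_mono n mA < wt_mono n mB"
    and x: "x \<in> degenerate_schubert n w"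
  shows "mon x mA = 0"
proof -
  have g: "Poly_Mapping.single mA uA + Poly_Mapping.single mB uB \<in> I_schubert n w"
    using ideal_gen_diff[OF f[unfolded I_schubert_def] C[unfolded I_schubert_def]] feq
    by (simp add: I_schubert_def)
  have "Poly_Mapping.single mA uA \<in> in_ideal n (I_schubert n w)"
    unfolding in_ideal_def using in_w_two[OF ne u lt] g by (intro ideal_gen_gen) (metis image_eqI)
  then have "peval x (Poly_Mapping.single mA uA) = 0"
    using x by (simp add: degenerate_schubert_def zero_set_def)
  then show ?thesis using u by (simp add: peval_single)
qed

lemma M_term_in:
  assumes w: "w \<circ> simple_refl i = w0 n" and i: "1 \<le> i" "i < n"
    and N: "valid_var n N"
  shows "Poly_Mapping.single (mono2 {n-i+1..n} N) u \<in> I_schubert n w"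
proof -
  let ?M = "{n-i+1..n}"
  have vM: "valid_var n ?M" using i by (auto simp: valid_var_def)
  have "PVar ?M \<in> I_schubert n w"
    unfolding I_schubert_def using vM not_gale_w[OF w i] by (intro ideal_gen_gen) blast
  then have "Poly_Mapping.single (Poly_Mapping.single N 1) u * PVar ?M \<in> I_schubert n w"
    unfolding I_schubert_def using N
    by (intro ideal_gen_smult) (auto intro!: A_ring_single simp: good_def)
  moreover have "Poly_Mapping.single (Poly_Mapping.single N 1) u * PVar ?M = Poly_Mapping.single (mono2 ?M N) u"
    by (simp add: PVar_def mult_single mono2_def add.commute)
  ultimately show ?thesis by simp
qed

lemma rel_in:
  assumes "distinct (a # b # c # S)" "set (a # b # c # S) \<subseteq> {1..n}" "length S + 2 \<le> n - 1"
  shows "pluecker_rel 1 (a # S) (b # c # S) \<in> I_schubert n w"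
  unfolding I_schubert_def
proof (intro ideal_gen_gen UnI1)
  show "pluecker_rel 1 (a # S) (b # c # S) \<in> pluecker_rels n"
    unfolding pluecker_rels_def using assms by (intro CollectI exI[of _ 1] exI[of _ "a#S"] exI[of _ "b#c#S"]) auto
qed

lemma reducible_from:
  assumes w: "w \<circ> simple_refl i = w0 n"
    and vP: "valid_var n P" and vQ: "valid_var n Q"
    and prod: "\<And>x. x \<in> degenerate_schubert n w \<Longrightarrow> x P * x Q = 0"
    and y1: "y1 \<in> degenerate_schubert n w" "y1 P \<noteq> 0"
    and y2: "y2 \<in> degenerate_schubert n w" "y2 Q \<noteq> 0"
  shows "reducible n (degenerate_schubert n w)"
proof -
  let ?G = "pluecker_rels n \<union> {PVar I | I. valid_var n I \<and> \<not> gale_le I (w ` {1..card I})}"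
  let ?X = "degenerate_schubert n w"
  define Mh where "Mh = {h \<in> in_ideal n (I_schubert n w). multihom n h}"
  define Z1 where "Z1 = zero_set n (Mh \<union> {PVar P})"
  define Z2 where "Z2 = zero_set n (Mh \<union> {PVar Q})"
  have bk: "x \<in> ?X" if xc: "x \<in> cone n" and xm: "\<forall>h\<in>Mh. peval x h = 0" for x
  proof -
    have "peval x h = 0" if h: "h \<in> in_ideal n (I_schubert n w)" for h
    proof (rule in_ideal_multihom_vanish[where G="?G"])
      show "\<And>g. g \<in> ?G \<Longrightarrow> multihom n g" by (rule multihom_gens)
      show "h \<in> in_ideal n (ideal_gen n ?G)" using h by (simp add: I_schubert_def)
      show "\<And>h. h \<in> in_ideal n (ideal_gen n ?G) \<Longrightarrow> multihom n h \<Longrightarrow> peval x h = 0"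
        using xm by (simp add: Mh_def I_schubert_def)
    qed
    then show ?thesis using xc by (simp add: degenerate_schubert_def zero_set_def)
  qed
  have Xc: "x \<in> cone n" "\<forall>h\<in>Mh. peval x h = 0" if "x \<in> ?X" for x
    using that by (auto simp: degenerate_schubert_def zero_set_def Mh_def)
  have c1: "zariski_closed n Z1" unfolding zariski_closed_def Z1_def
    using multihom_PVar[OF vP] by (intro exI[of _ "Mh \<union> {PVar P}"]) (auto simp: Mh_def)
  have c2: "zariski_closed n Z2" unfolding zariski_closed_def Z2_def
    using multihom_PVar[OF vQ] by (intro exI[of _ "Mh \<union> {PVar Q}"]) (auto simp: Mh_def)
  have U: "?X = Z1 \<union> Z2"
  proof
    show "?X \<subseteq> Z1 \<union> Z2"
    proof
      fix x assume x: "x \<in> ?X"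
      then have "x P = 0 \<or> x Q = 0" using prod by simp
      then show "x \<in> Z1 \<union> Z2" using Xc[OF x] by (auto simp: Z1_def Z2_def zero_set_def peval_PVar)
    qed
    show "Z1 \<union> Z2 \<subseteq> ?X" using bk by (auto simp: Z1_def Z2_def zero_set_def)
  qed
  have n1: "Z1 \<noteq> ?X" using y1 by (auto simp: Z1_def zero_set_def peval_PVar)
  have n2: "Z2 \<noteq> ?X" using y2 by (auto simp: Z2_def zero_set_def peval_PVar)
  show ?thesis unfolding reducible_def using c1 c2 U n1 n2 by blast
qed



lemma mono2_comm: "mono2 A B = mono2 B A"
  by (simp add: mono2_def add.commute)

lemma rel_expand:
  assumes d: "distinct (a # b # c # S)"
  shows "pluecker_rel 1 (a # S) (b # c # S) =
    Poly_Mapping.single (mono2 (set (a # S)) (set (b # c # S))) (sgnl (a # S) * sgnl (b # c # S)) +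
    Poly_Mapping.single (mono2 (set (b # S)) (set (a # c # S))) (- (sgnl (b # S) * sgnl (a # c # S))) +
    Poly_Mapping.single (mono2 (set (c # S)) (set (b # a # S))) (- (sgnl (c # S) * sgnl (b # a # S)))"
  unfolding three_term[OF d] using d
  by (simp add: pseq_mult2 single_uminus)

lemma sgnl_prod_nz: "sgnl X * sgnl Y \<noteq> 0" by (simp add: sgnl_nz)

lemma finish:
  assumes w: "w \<circ> simple_refl i = w0 n" and i: "1 \<le> i" "i < n"
    and fI: "f \<in> I_schubert n w"
    and feq: "f = Poly_Mapping.single (mono2 P Q) uA + Poly_Mapping.single mB uB +
                  Poly_Mapping.single (mono2 {n-i+1..n} N) uC"
    and vN: "valid_var n N" and PQ: "P \<noteq> Q" and neB: "mono2 P Q \<noteq> mB"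
    and u: "uA \<noteq> 0" "uB \<noteq> 0"
    and lt: "wt_mono n (mono2 P Q) < wt_mono n mB"
    and s1: "perm_list \<sigma>1 n" "set (take i \<sigma>1) \<noteq> {n-i+1..n}" "P \<in> Fam \<sigma>1 n"
    and s2: "perm_list \<sigma>2 n" "set (take i \<sigma>2) \<noteq> {n-i+1..n}" "Q \<in> Fam \<sigma>2 n"
  shows "reducible n (degenerate_schubert n w)"
proof (rule reducible_from[OF w])
  show vP: "valid_var n P" using perm_list.Fam_valid[OF s1(1) s1(3)] .
  show vQ: "valid_var n Q" using perm_list.Fam_valid[OF s2(1) s2(3)] .
  show "x P * x Q = 0" if x: "x \<in> degenerate_schubert n w" for x
  proof -
    have "mon x (mono2 P Q) = 0"
      by (rule key_vanish[OF fI feq neB u M_term_in[OF w i vN] lt x])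
    then show ?thesis using PQ by (simp add: mon_mono2)
  qed
  show "ytor n (Fam \<sigma>1 n) 1 \<in> degenerate_schubert n w"
    by (rule perm_list.witness[OF s1(1) w i s1(2)])
  show "ytor n (Fam \<sigma>1 n) 1 P \<noteq> 0" using s1(3) by (simp add: ytor_def)
  show "ytor n (Fam \<sigma>2 n) 1 \<in> degenerate_schubert n w"
    by (rule perm_list.witness[OF s2(1) w i s2(2)])
  show "ytor n (Fam \<sigma>2 n) 1 Q \<noteq> 0" using s2(3) by (simp add: ytor_def)
qed

lemma in_FamI: "1 \<le> k \<Longrightarrow> k \<le> n - 1 \<Longrightarrow> I = set (take k \<sigma>) \<Longrightarrow> I \<in> Fam \<sigma> n"
  unfolding Fam_def by blast

lemma wt_var_eq: "card I = k \<Longrightarrow> {a \<in> I. k \<le> a \<and> a \<le> n - 1} = T \<Longrightarrow> wt_var n I = card T"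
  by (simp add: wt_var_def)



lemma wt_var_eqc: "card I = k \<Longrightarrow> {a \<in> I. k \<le> a \<and> a \<le> n - 1} = T \<Longrightarrow> card T = c \<Longrightarrow> wt_var n I = c"
  by (simp add: wt_var_def)

lemma case1:
  assumes w: "w \<circ> simple_refl 1 = w0 n" and n: "n > 2"
  shows "reducible n (degenerate_schubert n w)"
proof -
  have i: "1 \<le> (1::nat)" "1 < n" using n by auto
  have M: "{n-1+1..n} = {n}" using n by auto
  have d: "distinct [1, 2, n]" using n by auto
  let ?f = "pluecker_rel 1 [1] [2, n]"
  have fI: "?f \<in> I_schubert n w" using rel_in[of 1 2 n "[]" n w] d n by auto
  note re = rel_expand[of 1 2 n "[]", OF d]
  define e1 where "e1 = sgnl [1] * sgnl [2, n]"
  define e2 where "e2 = - (sgnl [2] * sgnl [1, n])"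
  define e3 where "e3 = - (sgnl [n] * sgnl [2, 1])"
  have feq: "?f = Poly_Mapping.single (mono2 {2} {1, n}) e2 + Poly_Mapping.single (mono2 {1} {2, n}) e1
       + Poly_Mapping.single (mono2 {n-1+1..n} {1,2}) e3"
    unfolding M using re by (simp add: e1_def e2_def e3_def add_ac insert_commute)
  have w2: "wt_var n {2} = 1" by (rule wt_var_eqc[where T="{2}"]) (use n in auto)
  have w1n: "wt_var n {1, n} = 0" by (rule wt_var_eqc[where k=2 and T="{}"]) (use n in auto)
  have w1: "wt_var n {1} = 1" by (rule wt_var_eqc[where T="{1}"]) (use n in auto)
  have w2n: "wt_var n {2, n} = 1" by (rule wt_var_eqc[where k=2 and T="{2}"]) (use n in auto)
  have lt: "wt_mono n (mono2 {2} {1, n}) < wt_mono n (mono2 {1} {2, n})"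
  proof -
    have a: "wt_mono n (mono2 {2} {1, n}) = wt_var n {2} + wt_var n {1,n}" by (rule wt_mono2) auto
    have b: "wt_mono n (mono2 {1} {2, n}) = wt_var n {1} + wt_var n {2,n}" by (rule wt_mono2) auto
    show ?thesis by (simp only: a b w2 w1n w1 w2n)
  qed
  have pl1: "perm_list ([2, 1] @ [3..<Suc n]) n"
    by unfold_locales (use n in auto)
  have pl2: "perm_list ([1, n] @ [2..<n]) n"
    by unfold_locales (use n in auto)
  show ?thesis
  proof (rule finish[OF w i fI feq])
    show "valid_var n {1, 2}" using n by (auto simp: valid_var_def)
    show "{2} \<noteq> {1, n}" by auto
    show "mono2 {2} {1, n} \<noteq> mono2 {1} {2, n}" by (rule mono2_ne) (use n in auto)
    show "e2 \<noteq> 0" "e1 \<noteq> 0" by (simp_all add: e1_def e2_def sgnl_nz)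
    show "wt_mono n (mono2 {2} {1, n}) < wt_mono n (mono2 {1} {2, n})" by (rule lt)
    show "perm_list ([2, 1] @ [3..<Suc n]) n" by (rule pl1)
    show "set (take 1 ([2, 1] @ [3..<Suc n])) \<noteq> {n-1+1..n}" using n by auto
    show "{2} \<in> Fam ([2, 1] @ [3..<Suc n]) n" by (rule in_FamI[of 1]) (use n in auto)
    show "perm_list ([1, n] @ [2..<n]) n" by (rule pl2)
    show "set (take 1 ([1, n] @ [2..<n])) \<noteq> {n-1+1..n}" using n by auto
    show "{1, n} \<in> Fam ([1, n] @ [2..<n]) n" by (rule in_FamI[of 2]) (use n in auto)
  qed
qed



lemma case2:
  assumes w: "w \<circ> simple_refl i = w0 n" and i2: "2 \<le> i" and ni: "2 * i \<le> n"
  shows "reducible n (degenerate_schubert n w)"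
proof -
  have i: "1 \<le> i" "i < n" using i2 ni by auto
  define S where "S = [n-i+1..<n]"
  define S' where "S' = {n-i+1..<n}"
  have sS: "set S = S'" by (simp add: S_def S'_def)
  have lS: "length S = i - 1" using i by (simp add: S_def)
  have cS': "card S' = i - 1" using i by (simp add: S'_def)
  have d: "distinct (1 # i # n # S)" using i2 ni by (auto simp: S_def)
  let ?f = "pluecker_rel 1 (1 # S) (i # n # S)"
  have fI: "?f \<in> I_schubert n w"
    by (rule rel_in) (use d i2 ni lS in \<open>auto simp: S_def\<close>)
  note re = rel_expand[OF d]
  define P where "P = insert 1 S'"
  define Q where "Q = insert i (insert n S')"
  define P2 where "P2 = insert i S'"
  define Q2 where "Q2 = insert 1 (insert n S')"
  define N where "N = insert i (insert 1 S')"
  have M: "{n-i+1..n} = insert n S'" using i by (auto simp: S'_def)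
  define e1 where "e1 = sgnl (1 # S) * sgnl (i # n # S)"
  define e2 where "e2 = - (sgnl (i # S) * sgnl (1 # n # S))"
  define e3 where "e3 = - (sgnl (n # S) * sgnl (i # 1 # S))"
  have feq: "?f = Poly_Mapping.single (mono2 P Q) e1 + Poly_Mapping.single (mono2 P2 Q2) e2
       + Poly_Mapping.single (mono2 {n-i+1..n} N) e3"
    unfolding M using re by (simp add: e1_def e2_def e3_def sS P_def Q_def P2_def Q2_def N_def)
  have 1: "1 \<notin> S'" "n \<notin> S'" "i \<notin> S'" using i2 ni by (auto simp: S'_def)
  have wP: "wt_var n P = i - 1"
    by (rule wt_var_eqc[where k=i and T=S']) (use i2 ni 1 cS' in \<open>auto simp: P_def S'_def\<close>)
  have wQ: "wt_var n Q = i - 1"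
    by (rule wt_var_eqc[where k="i+1" and T=S']) (use i2 ni 1 cS' in \<open>auto simp: Q_def S'_def\<close>)
  have wP2: "wt_var n P2 = i"
    by (rule wt_var_eqc[where k=i and T="insert i S'"]) (use i2 ni 1 cS' in \<open>auto simp: P2_def S'_def\<close>)
  have wQ2: "wt_var n Q2 = i - 1"
    by (rule wt_var_eqc[where k="i+1" and T=S']) (use i2 ni 1 cS' in \<open>auto simp: Q2_def S'_def\<close>)
  have PQ: "P \<noteq> Q"
  proof
    assume "P = Q"
    moreover have "n \<in> Q" by (simp add: Q_def)
    moreover have "n \<notin> P" using 1 i2 ni by (simp add: P_def)
    ultimately show False by simp
  qed
  have P2Q2: "P2 \<noteq> Q2"
  proof
    assume "P2 = Q2"
    moreover have "1 \<in> Q2" by (simp add: Q2_def)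
    moreover have "1 \<notin> P2" using 1 i2 ni by (simp add: P2_def)
    ultimately show False by simp
  qed
  have lt: "wt_mono n (mono2 P Q) < wt_mono n (mono2 P2 Q2)"
  proof -
    have a: "wt_mono n (mono2 P Q) = wt_var n P + wt_var n Q" by (rule wt_mono2[OF PQ])
    have b: "wt_mono n (mono2 P2 Q2) = wt_var n P2 + wt_var n Q2" by (rule wt_mono2[OF P2Q2])
    show ?thesis unfolding a b wP wQ wP2 wQ2 using i2 by simp
  qed
  define \<sigma>1 where "\<sigma>1 = 1 # S @ [2..<n-i+1] @ [n]"
  define \<sigma>2 where "\<sigma>2 = S @ [i, n] @ [1..<i] @ [i+1..<n-i+1]"
  have pl1: "perm_list \<sigma>1 n"
    by unfold_locales (use i2 ni in \<open>auto simp: \<sigma>1_def S_def\<close>)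
  have pl2: "perm_list \<sigma>2 n"
    by unfold_locales (use i2 ni in \<open>auto simp: \<sigma>2_def S_def\<close>)
  have tk: "take (length xs) (xs @ ys) = xs" for xs ys :: "nat list" by simp
  have tk1: "take (Suc (length xs)) (xs @ y # ys) = xs @ [y]" for xs ys :: "nat list" and y by simp
  have t1: "set (take i \<sigma>1) = P"
  proof -
    have "i = Suc (length S)" using lS i by simp
    then have "take i \<sigma>1 = 1 # S" unfolding \<sigma>1_def by (simp only: take_Suc_Cons tk)
    then show ?thesis by (simp add: P_def sS)
  qed
  have t2: "set (take i \<sigma>2) = insert i S'"
  proof -
    have "i = Suc (length S)" using lS i by simp
    then have "take i \<sigma>2 = S @ [i]" unfolding \<sigma>2_def by (simp only: append_Cons tk1)
    then show ?thesis by (simp add: sS)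
  qed
  have t2': "set (take (i+1) \<sigma>2) = Q"
  proof -
    have g: "take (length S + 2) (S @ [i, n] @ R) = S @ [i, n]" for R by simp
    have "i + 1 = length S + 2" using lS i by simp
    then have "take (i+1) \<sigma>2 = S @ [i, n]" unfolding \<sigma>2_def by (simp only: g)
    then show ?thesis by (auto simp: sS Q_def)
  qed
  show ?thesis
  proof (rule finish[OF w i fI feq])
    show "valid_var n N" using i2 ni 1 cS' by (auto simp: valid_var_def N_def S'_def)
    show "P \<noteq> Q" by (rule PQ)
    show "mono2 P Q \<noteq> mono2 P2 Q2"
    proof (rule mono2_ne)
      show "P \<noteq> P2" using 1 i2 by (auto simp: P_def P2_def)
      have "n \<in> Q2" "n \<notin> P" using 1 i2 ni by (auto simp: P_def Q2_def)
      then show "P \<noteq> Q2" by blast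
    qed
    show "e1 \<noteq> 0" "e2 \<noteq> 0" by (simp_all add: e1_def e2_def sgnl_nz)
    show "wt_mono n (mono2 P Q) < wt_mono n (mono2 P2 Q2)" by (rule lt)
    show "perm_list \<sigma>1 n" by (rule pl1)
    show "set (take i \<sigma>1) \<noteq> {n-i+1..n}"
    proof
      assume "set (take i \<sigma>1) = {n-i+1..n}"
      then have "P = insert n S'" using t1 M by simp
      moreover have "n \<notin> P" using 1 ni i2 by (simp add: P_def)
      ultimately show False by simp
    qed
    show "P \<in> Fam \<sigma>1 n" by (rule in_FamI[of i]) (use i t1 in auto)
    show "perm_list \<sigma>2 n" by (rule pl2)
    show "set (take i \<sigma>2) \<noteq> {n-i+1..n}" unfolding t2 M using 1 i by auto
    show "Q \<in> Fam \<sigma>2 n" by (rule in_FamI[of "i+1"]) (use i2 ni t2' in auto)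
  qed
qed



lemma case3:
  assumes w: "w \<circ> simple_refl i = w0 n" and ni: "n + 2 \<le> 2 * i" and iN: "i < n"
  shows "reducible n (degenerate_schubert n w)"
proof -
  have i3: "3 \<le> i" using ni iN by linarith
  have i: "1 \<le> i" "i < n" using i3 iN by auto
  define S where "S = [n-i+1..<i-1] @ [i..<n]"
  define S' where "S' = {n-i+1..<i-1} \<union> {i..<n}"
  have sS: "set S = S'" by (simp add: S_def S'_def)
  have lS: "length S = i - 2" using i3 ni iN by (simp add: S_def)
  have cS': "card S' = i - 2"
  proof -
    have "card S' = card {n-i+1..<i-1} + card {i..<n}" unfolding S'_def
      by (rule card_Un_disjoint) auto
    then show ?thesis using i3 ni iN by simp
  qed
  have d: "distinct (1 # (i-1) # n # S)" using i3 ni iN by (auto simp: S_def)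
  let ?f = "pluecker_rel 1 (1 # S) ((i-1) # n # S)"
  have fI: "?f \<in> I_schubert n w"
    by (rule rel_in) (use d i3 ni iN lS in \<open>auto simp: S_def\<close>)
  note re = rel_expand[OF d]
  define P where "P = insert n S'"
  define Q where "Q = insert (i-1) (insert 1 S')"
  define P2 where "P2 = insert (i-1) S'"
  define Q2 where "Q2 = insert 1 (insert n S')"
  define N where "N = insert 1 S'"
  have 1: "1 \<notin> S'" "n \<notin> S'" "i - 1 \<notin> S'" using i3 ni iN by (auto simp: S'_def)
  have M: "{n-i+1..n} = insert (i-1) (insert n S')" using i3 ni iN by (auto simp: S'_def)
  define e1 where "e1 = sgnl (1 # S) * sgnl ((i-1) # n # S)"
  define e2 where "e2 = - (sgnl ((i-1) # S) * sgnl (1 # n # S))"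
  define e3 where "e3 = - (sgnl (n # S) * sgnl ((i-1) # 1 # S))"
  have feq: "?f = Poly_Mapping.single (mono2 P Q) e3 + Poly_Mapping.single (mono2 P2 Q2) e2
       + Poly_Mapping.single (mono2 {n-i+1..n} N) e1"
  proof -
    have "mono2 {n-i+1..n} N = mono2 N {n-i+1..n}" by (rule mono2_comm)
    then show ?thesis unfolding M using re
      by (simp add: e1_def e2_def e3_def sS P_def Q_def P2_def Q2_def N_def add_ac)
  qed
  have wP: "wt_var n P = n - i"
    by (rule wt_var_eqc[where k="i-1" and T="{i..<n}"]) (use i3 ni iN 1 cS' in \<open>auto simp: P_def S'_def\<close>)
  have wQ: "wt_var n Q = n - i"
    by (rule wt_var_eqc[where k="i" and T="{i..<n}"]) (use i3 ni iN 1 cS' in \<open>auto simp: Q_def S'_def\<close>)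
  have wP2: "wt_var n P2 = n - i + 1"
    by (rule wt_var_eqc[where k="i-1" and T="{i-1..<n}"]) (use i3 ni iN 1 cS' in \<open>auto simp: P2_def S'_def\<close>)
  have wQ2: "wt_var n Q2 = n - i"
    by (rule wt_var_eqc[where k="i" and T="{i..<n}"]) (use i3 ni iN 1 cS' in \<open>auto simp: Q2_def S'_def\<close>)
  have PQ: "P \<noteq> Q"
  proof
    assume "P = Q"
    moreover have "1 \<in> Q" by (simp add: Q_def)
    moreover have "1 \<notin> P" using 1 iN i3 by (simp add: P_def)
    ultimately show False by simp
  qed
  have P2Q2: "P2 \<noteq> Q2"
  proof
    assume "P2 = Q2"
    moreover have "1 \<in> Q2" by (simp add: Q2_def)
    moreover have "1 \<notin> P2" using 1 i3 by (simp add: P2_def)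
    ultimately show False by simp
  qed
  have lt: "wt_mono n (mono2 P Q) < wt_mono n (mono2 P2 Q2)"
  proof -
    have a: "wt_mono n (mono2 P Q) = wt_var n P + wt_var n Q" by (rule wt_mono2[OF PQ])
    have b: "wt_mono n (mono2 P2 Q2) = wt_var n P2 + wt_var n Q2" by (rule wt_mono2[OF P2Q2])
    show ?thesis unfolding a b wP wQ wP2 wQ2 by simp
  qed
  define R where "R = [2..<n-i+1]"
  have sR: "set R = {2..<n-i+1}" unfolding R_def by (rule set_upt)
  define \<sigma>1 where "\<sigma>1 = n # S @ [1, i-1] @ R"
  define \<sigma>2 where "\<sigma>2 = 1 # (i-1) # S @ [n] @ R"
  have pl1: "perm_list \<sigma>1 n"
  proof
    show "distinct \<sigma>1" using i3 ni iN by (auto simp: \<sigma>1_def S_def R_def)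
    show "set \<sigma>1 = {1..n}" unfolding \<sigma>1_def set_simps set_append sS sR S'_def
      using i3 ni iN by auto
  qed
  have pl2: "perm_list \<sigma>2 n"
  proof
    show "distinct \<sigma>2" using i3 ni iN by (auto simp: \<sigma>2_def S_def R_def)
    show "set \<sigma>2 = {1..n}" unfolding \<sigma>2_def set_simps set_append sS sR S'_def
      using i3 ni iN by auto
  qed
  have tk: "take (length xs) (xs @ ys) = xs" for xs ys :: "nat list" by simp
  have t1: "set (take (i-1) \<sigma>1) = P"
  proof -
    have "i - 1 = Suc (length S)" using lS i3 by simp
    then have "take (i-1) \<sigma>1 = n # S" unfolding \<sigma>1_def by (simp only: take_Suc_Cons tk)
    then show ?thesis by (simp add: P_def sS)
  qed
  have t1': "set (take i \<sigma>1) = insert 1 P"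
  proof -
    have g: "take (Suc (length S) + 1) (n # S @ [1, b] @ R) = n # S @ [1]" for b by simp
    have "i = Suc (length S) + 1" using lS i3 by simp
    then have "take i \<sigma>1 = n # S @ [1]" unfolding \<sigma>1_def by (metis g)
    then show ?thesis by (auto simp: P_def sS)
  qed
  have t2: "set (take i \<sigma>2) = Q"
  proof -
    have g: "take (length S + 2) (1 # b # S @ [n] @ R) = 1 # b # S" for b by simp
    have "i = length S + 2" using lS i3 by simp
    then have "take i \<sigma>2 = 1 # (i-1) # S" unfolding \<sigma>2_def by (metis g)
    then show ?thesis by (auto simp: Q_def sS)
  qed
  have Mn1: "1 \<notin> {n-i+1..n}" using iN by auto
  show ?thesis
  proof (rule finish[OF w i fI feq])
    show "valid_var n N" using i3 ni iN 1 cS' by (auto simp: valid_var_def N_def S'_def)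
    show "P \<noteq> Q" by (rule PQ)
    show "mono2 P Q \<noteq> mono2 P2 Q2"
    proof (rule mono2_ne)
      have "i - 1 \<in> P2" "i - 1 \<notin> P" using 1 i3 iN by (auto simp: P_def P2_def)
      then show "P \<noteq> P2" by blast
      have "1 \<in> Q2" "1 \<notin> P" using 1 iN i3 by (auto simp: P_def Q2_def)
      then show "P \<noteq> Q2" by blast
    qed
    show "e3 \<noteq> 0" "e2 \<noteq> 0" by (simp_all add: e3_def e2_def sgnl_nz)
    show "wt_mono n (mono2 P Q) < wt_mono n (mono2 P2 Q2)" by (rule lt)
    show "perm_list \<sigma>1 n" by (rule pl1)
    show "set (take i \<sigma>1) \<noteq> {n-i+1..n}"
    proof
      assume "set (take i \<sigma>1) = {n-i+1..n}"
      then have "1 \<in> {n-i+1..n}" unfolding t1' by blast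
      then show False using Mn1 by blast
    qed
    show "P \<in> Fam \<sigma>1 n" by (rule in_FamI[of "i-1"]) (use i3 iN t1 in auto)
    show "perm_list \<sigma>2 n" by (rule pl2)
    show "set (take i \<sigma>2) \<noteq> {n-i+1..n}"
    proof
      assume "set (take i \<sigma>2) = {n-i+1..n}"
      then have "1 \<in> {n-i+1..n}" unfolding t2 Q_def by blast
      then show False using Mn1 by blast
    qed
    show "Q \<in> Fam \<sigma>2 n" by (rule in_FamI[of "i"]) (use i3 iN t2 in auto)
  qed
qed



theorem theorem6p1:
  fixes n i :: nat and w :: "nat \<Rightarrow> nat"
  assumes "n > 2"
    and "i \<in> {1..n-1}"
    and "w permutes {1..n}"
    and "w \<circ> simple_refl i = w0 n"
    and "odd n \<Longrightarrow> i \<noteq> (n + 1) div 2"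
  shows "reducible n (degenerate_schubert n w)"
proof -
  have i: "1 \<le> i" "i < n" using assms(1,2) by auto
  consider "i = 1" | "2 \<le> i \<and> 2 * i \<le> n" | "n + 2 \<le> 2 * i" | "2 * i = n + 1" using i by linarith
  then show ?thesis
  proof cases
    case 1
    then show ?thesis using case1[of w n] assms(1,4) by simp
  next
    case 2
    then show ?thesis using case2[OF assms(4)] by simp
  next
    case 3
    then show ?thesis using case3[OF assms(4) _ i(2)] by simp
  next
    case 4
    then have "odd n" by presburger
    moreover have "i = (n + 1) div 2" using 4 by simp
    ultimately show ?thesis using assms(5) by simp
  qed
qed

end
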